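(* Let $(G,\mathcal{P})$ and $(H,\mathcal{Q})$ be group pairs with finite generating sets $S$ of $G$ and $T$ of $H$. If $(G,\mathcal{P})$ is a quasi-retract of $(H,\mathcal{Q})$ and $\hat\Gamma(H,\mathcal{Q},T)$ is coarsely unicone simply-connected, then $\hat\Gamma(G,\mathcal{P},S)$ is coarsely unicone simply-connected.
   Context: A group pair $(G,\mathcal{P})$: $G$ finitely generated, $\mathcal{P}$ a non-empty finite collection of subgroups (repetitions allowed); $G/\mathcal{P}=\coprod_{P\in\mathcal{P}}G/P$, elements viewed as cosets (subsets of $G$). The coned-off Cayley graph $\hat\Gamma(G,\mathcal{P},S)$ has vertex set $G\sqcup G/\mathcal{P}$, edges $\{g,g'\}$ for $g^{-1}g'\in S$ and $\{g,A\}$ for $g\in A\in G/\mathcal{P}$; vertices in $G/\mathcal{P}$ are cone vertices. An edge loop of length $l$ is a vertex sequence $v_1,\dots,v_l$ with $\{v_i,v_{i+1}\}$ and $\{v_l,v_1\}$ edges; it is unicone if it has at most one cone vertex. $\hat\Gamma_l$ is the 2-complex obtained by attaching a 2-cell along each unicone loop of length $<l$; the graph is coarsely unicone simply-connected if some $\hat\Gamma_l$ is simply-connected. With word metrics, $f$ is $(L,C)$-Lipschitz if $d(f(x),f(x'))\le L\,d(x,x')+C$. For $L\ge1,C\ge0,M\ge0$, an $(L,C,M)$-Lipschitz map of pairs $f=(f_1,f_2)$ is an $(L,C)$-Lipschitz $f_1\colon G\to H$ and $f_2\colon G/\mathcal{P}\to H/\mathcal{Q}$ with Hausdorff distance between $f_1(A)$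 and $f_2(A)$ less than $M$ for all $A$. An $(L,C,M)$-quasi-retraction of pairs $(f,r)$ consists of such $f\colon(G,\mathcal{P})\to(H,\mathcal{Q})$, $r\colon(H,\mathcal{Q})\to(G,\mathcal{P})$ with $d_G(r_1f_1(g),g)\le C$ for all $g$ and $r_2\circ f_2=\mathrm{id}$; $(G,\mathcal{P})$ is a quasi-retract of $(H,\mathcal{Q})$ if such $(f,r)$ exists for some constants. *)

theory Defs
  imports "HOL-Algebra.Generated_Groups" "HOL-Library.Extended_Real"
begin

text \<open>A group pair: a group G together with a non-empty finite collection of
subgroups, given as an indexed family P over a finite non-empty index set I
(so repetitions are allowed).\<close>
definition group_pair :: "('a, 'c) monoid_scheme \<Rightarrow> 'i set \<Rightarrow> ('i \<Rightarrow> 'a set) \<Rightarrow> bool" where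
  "group_pair G I P \<longleftrightarrow> group G \<and> finite I \<and> I \<noteq> {} \<and> (\<forall>i\<in>I. subgroup (P i) G)"

definition fin_gen_set :: "('a, 'c) monoid_scheme \<Rightarrow> 'a set \<Rightarrow> bool" where
  "fin_gen_set G S \<longleftrightarrow> finite S \<and> S \<subseteq> carrier G \<and> generate G S = carrier G"

text \<open>G/P = disjoint union of the left coset spaces G/P_i; an element is a pair
(i, gP_i), the coset being a subset of G.\<close>
definition cosets_pair :: "('a, 'c) monoid_scheme \<Rightarrow> 'i set \<Rightarrow> ('i \<Rightarrow> 'a set) \<Rightarrow> ('i \<times> 'a set) set" where
  "cosets_pair G I P = {(i, x <#\<^bsub>G\<^esub> P i) | i x. i \<in> I \<and> x \<in> carrier G}"

definition word_length :: "('a, 'c) monoid_scheme \<Rightarrow> 'a set \<Rightarrow> 'a \<Rightarrow> nat" where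
  "word_length G S x = (LEAST n. \<exists>w. length w = n \<and> set w \<subseteq> S \<union> (\<lambda>s. inv\<^bsub>G\<^esub> s) ` S
        \<and> foldr (\<lambda>a b. a \<otimes>\<^bsub>G\<^esub> b) w \<one>\<^bsub>G\<^esub> = x)"

definition word_dist :: "('a, 'c) monoid_scheme \<Rightarrow> 'a set \<Rightarrow> 'a \<Rightarrow> 'a \<Rightarrow> nat" where
  "word_dist G S g h = word_length G S (inv\<^bsub>G\<^esub> g \<otimes>\<^bsub>G\<^esub> h)"

definition hausdorff_word :: "('a, 'c) monoid_scheme \<Rightarrow> 'a set \<Rightarrow> 'a set \<Rightarrow> 'a set \<Rightarrow> ereal" where
  "hausdorff_word G S X Y = max (SUP x\<in>X. INF y\<in>Y. ereal (real (word_dist G S x y)))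
                                (SUP y\<in>Y. INF x\<in>X. ereal (real (word_dist G S x y)))"

definition lipschitz_pair ::
  "('a, 'c) monoid_scheme \<Rightarrow> 'a set \<Rightarrow> 'i set \<Rightarrow> ('i \<Rightarrow> 'a set) \<Rightarrow>
   ('b, 'd) monoid_scheme \<Rightarrow> 'b set \<Rightarrow> 'j set \<Rightarrow> ('j \<Rightarrow> 'b set) \<Rightarrow>
   real \<Rightarrow> real \<Rightarrow> real \<Rightarrow> ('a \<Rightarrow> 'b) \<Rightarrow> ('i \<times> 'a set \<Rightarrow> 'j \<times> 'b set) \<Rightarrow> bool" where
  "lipschitz_pair G S I P H T J Q L C M f1 f2 \<longleftrightarrow>
     L \<ge> 1 \<and> C \<ge> 0 \<and> M \<ge> 0 \<and>
     f1 \<in> carrier G \<rightarrow> carrier H \<and>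
     f2 \<in> cosets_pair G I P \<rightarrow> cosets_pair H J Q \<and>
     (\<forall>x\<in>carrier G. \<forall>y\<in>carrier G.
        real (word_dist H T (f1 x) (f1 y)) \<le> L * real (word_dist G S x y) + C) \<and>
     (\<forall>A\<in>cosets_pair G I P. hausdorff_word H T (f1 ` snd A) (snd (f2 A)) < ereal M)"

definition quasi_retract_pair ::
  "('a, 'c) monoid_scheme \<Rightarrow> 'a set \<Rightarrow> 'i set \<Rightarrow> ('i \<Rightarrow> 'a set) \<Rightarrow>
   ('b, 'd) monoid_scheme \<Rightarrow> 'b set \<Rightarrow> 'j set \<Rightarrow> ('j \<Rightarrow> 'b set) \<Rightarrow> bool" where
  "quasi_retract_pair G S I P H T J Q \<longleftrightarrow>
     (\<exists>L C M f1 f2 r1 r2.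
        lipschitz_pair G S I P H T J Q L C M f1 f2 \<and>
        lipschitz_pair H T J Q G S I P L C M r1 r2 \<and>
        (\<forall>g\<in>carrier G. real (word_dist G S (r1 (f1 g)) g) \<le> C) \<and>
        (\<forall>A\<in>cosets_pair G I P. r2 (f2 A) = A))"

definition cone_vertices :: "('a, 'c) monoid_scheme \<Rightarrow> 'i set \<Rightarrow> ('i \<Rightarrow> 'a set) \<Rightarrow> ('a + ('i \<times> 'a set)) set" where
  "cone_vertices G I P = Inl ` carrier G \<union> Inr ` cosets_pair G I P"

definition cone_adj :: "('a, 'c) monoid_scheme \<Rightarrow> 'a set \<Rightarrow> ('a + ('i \<times> 'a set)) \<Rightarrow> ('a + ('i \<times> 'a set)) \<Rightarrow> bool" where
  "cone_adj G S u v = (case (u, v) of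
      (Inl g, Inl g') \<Rightarrow> inv\<^bsub>G\<^esub> g \<otimes>\<^bsub>G\<^esub> g' \<in> S \<or> inv\<^bsub>G\<^esub> g' \<otimes>\<^bsub>G\<^esub> g \<in> S
    | (Inl g, Inr A) \<Rightarrow> g \<in> snd A
    | (Inr A, Inl g) \<Rightarrow> g \<in> snd A
    | (Inr _, Inr _) \<Rightarrow> False)"

definition edge_path :: "'v set \<Rightarrow> ('v \<Rightarrow> 'v \<Rightarrow> bool) \<Rightarrow> 'v list \<Rightarrow> bool" where
  "edge_path V adj p \<longleftrightarrow> p \<noteq> [] \<and> set p \<subseteq> V \<and> (\<forall>i. Suc i < length p \<longrightarrow> adj (p ! i) (p ! Suc i))"

definition edge_loop :: "'v set \<Rightarrow> ('v \<Rightarrow> 'v \<Rightarrow> bool) \<Rightarrow> 'v list \<Rightarrow> bool" where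
  "edge_loop V adj c \<longleftrightarrow> edge_path V adj c \<and> adj (last c) (hd c)"

definition is_cone_vertex :: "'a + 'b \<Rightarrow> bool" where
  "is_cone_vertex v = (case v of Inl _ \<Rightarrow> False | Inr _ \<Rightarrow> True)"

definition unicone :: "('a + 'b) list \<Rightarrow> bool" where
  "unicone c \<longleftrightarrow> length (filter is_cone_vertex c) \<le> 1"

text \<open>Elementary homotopies of edge paths in the 2-complex with 1-skeleton the
graph (V, adj) and 2-cells attached along the loops in Cells: removing a
backtrack u v u, or inserting the boundary of a 2-cell.\<close>
inductive htpy_step :: "'v set \<Rightarrow> ('v \<Rightarrow> 'v \<Rightarrow> bool) \<Rightarrow> 'v list set \<Rightarrow> 'v list \<Rightarrow> 'v list \<Rightarrow> bool"
  for V adj Cells where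
  backtrack: "edge_path V adj (p @ [u, v, u] @ q) \<Longrightarrow>
      htpy_step V adj Cells (p @ [u, v, u] @ q) (p @ [u] @ q)"
| cell: "c \<in> Cells \<Longrightarrow> edge_path V adj (p @ [hd c] @ q) \<Longrightarrow>
      htpy_step V adj Cells (p @ [hd c] @ q) (p @ c @ [hd c] @ q)"

definition simply_connected_2cx :: "'v set \<Rightarrow> ('v \<Rightarrow> 'v \<Rightarrow> bool) \<Rightarrow> 'v list set \<Rightarrow> bool" where
  "simply_connected_2cx V adj Cells \<longleftrightarrow>
     V \<noteq> {} \<and>
     (\<forall>u\<in>V. \<forall>v\<in>V. \<exists>p. edge_path V adj p \<and> hd p = u \<and> last p = v) \<and>
     (\<forall>p. edge_path V adj p \<and> hd p = last p \<longrightarrow>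
        (\<lambda>x y. htpy_step V adj Cells x y \<or> htpy_step V adj Cells y x)\<^sup>*\<^sup>* p [hd p])"

text \<open>The 2-complex hat-Gamma_l: attach a 2-cell along every unicone edge loop of length < l.\<close>
definition cone_cells :: "('a, 'c) monoid_scheme \<Rightarrow> 'i set \<Rightarrow> ('i \<Rightarrow> 'a set) \<Rightarrow> 'a set \<Rightarrow> nat
    \<Rightarrow> ('a + ('i \<times> 'a set)) list set" where
  "cone_cells G I P S l = {c. edge_loop (cone_vertices G I P) (cone_adj G S) c \<and> unicone c \<and> length c < l}"

definition coarsely_unicone_sc :: "('a, 'c) monoid_scheme \<Rightarrow> 'i set \<Rightarrow> ('i \<Rightarrow> 'a set) \<Rightarrow> 'a set \<Rightarrow> bool" where
  "coarsely_unicone_sc G I P S \<longleftrightarrow>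
     (\<exists>l. simply_connected_2cx (cone_vertices G I P) (cone_adj G S) (cone_cells G I P S l))"

end

theory Submission
  imports Defs
begin


lemma successively_nth:
  "successively P xs \<longleftrightarrow> (\<forall>i. Suc i < length xs \<longrightarrow> P (xs ! i) (xs ! Suc i))"
proof (induction xs)
  case (Cons x xs)
  show ?case
  proof (cases xs)
    case Nil then show ?thesis by simp
  next
    case (Cons y ys)
    have "(\<forall>i. Suc i < length (x#xs) \<longrightarrow> P ((x#xs)!i) ((x#xs)!Suc i)) \<longleftrightarrow>
          P x y \<and> (\<forall>i. Suc i < length xs \<longrightarrow> P (xs!i) (xs!Suc i))" (is "?L \<longleftrightarrow> ?R")
    proof
      assume L: ?L
      have "P x y" using L[rule_format, of 0] Cons by simp
      moreover have "\<forall>i. Suc i < length xs \<longrightarrow> P (xs!i) (xs!Suc i)"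
      proof (intro allI impI)
        fix i assume "Suc i < length xs"
        then show "P (xs!i) (xs!Suc i)" using L[rule_format, of "Suc i"] by simp
      qed
      ultimately show ?R by blast
    next
      assume R: ?R
      show ?L
      proof (intro allI impI)
        fix i assume "Suc i < length (x#xs)"
        then show "P ((x#xs)!i) ((x#xs)!Suc i)" using R Cons by (cases i) auto
      qed
    qed
    then show ?thesis using Cons.IH Cons by simp
  qed
qed simp

lemma edge_path_succ:
  "edge_path V adj p \<longleftrightarrow> p \<noteq> [] \<and> set p \<subseteq> V \<and> successively adj p"
  unfolding edge_path_def successively_nth by blast

lemma edge_path_append:
  "edge_path V adj (xs @ ys) \<longleftrightarrow>
   (xs = [] \<longrightarrow> edge_path V adj ys) \<and> (ys = [] \<longrightarrow> edge_path V adj xs) \<and>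
   (xs \<noteq> [] \<and> ys \<noteq> [] \<longrightarrow> edge_path V adj xs \<and> edge_path V adj ys \<and> adj (last xs) (hd ys))"
  unfolding edge_path_succ successively_append_iff by auto

lemma edge_path_single[simp]: "edge_path V adj [x] \<longleftrightarrow> x \<in> V"
  unfolding edge_path_succ by auto

lemma edge_path_Cons2: "edge_path V adj (x # y # p) \<longleftrightarrow> x \<in> V \<and> adj x y \<and> edge_path V adj (y # p)"
  unfolding edge_path_succ by auto

lemma edge_path_rev:
  assumes "\<And>x y. adj x y \<Longrightarrow> adj y x"
  shows "edge_path V adj (rev p) \<longleftrightarrow> edge_path V adj p"
proof -
  have "successively adj (rev p) \<longleftrightarrow> successively adj p"
    unfolding successively_rev using assms by (metis successively_mono)
  then show ?thesis unfolding edge_path_succ by auto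
qed

lemma edge_path_replace:
  assumes "edge_path V adj (a @ p @ b)" "edge_path V adj p'" "p \<noteq> []"
    "hd p' = hd p" "last p' = last p"
  shows "edge_path V adj (a @ p' @ b)"
proof -
  have p': "p' \<noteq> []" using assms(2) by (simp add: edge_path_def)
  have 1: "edge_path V adj (p @ b) \<Longrightarrow> edge_path V adj (p' @ b)"
    using assms(2-5) p' unfolding edge_path_append by auto
  show ?thesis
  proof (cases "a = []")
    case True then show ?thesis using assms(1) 1 by simp
  next
    case False
    have "edge_path V adj (a @ (p @ b))" using assms(1) by simp
    then have "edge_path V adj a" "edge_path V adj (p @ b)" "adj (last a) (hd (p @ b))"
      using False assms(3) unfolding edge_path_append[of V adj a] by auto
    then show ?thesis using 1 False assms(3,4) p' unfolding edge_path_append[of V adj a] by auto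
  qed
qed

abbreviation hrel where
  "hrel V adj Cells \<equiv> (\<lambda>x y. htpy_step V adj Cells x y \<or> htpy_step V adj Cells y x)\<^sup>*\<^sup>*"

lemma edge_loop_ins:
  assumes "edge_path V adj (p @ [hd c] @ q)" "edge_loop V adj c"
  shows "edge_path V adj (p @ c @ [hd c] @ q)"
proof -
  have c: "c \<noteq> []" "edge_path V adj c" "adj (last c) (hd c)" using assms(2) unfolding edge_loop_def edge_path_def by auto
  have 1: "edge_path V adj (c @ [hd c])" using c unfolding edge_path_append by (auto simp: edge_path_def)
  have "edge_path V adj (p @ [hd c] @ q)" by fact
  then have "edge_path V adj (p @ (c @ [hd c]) @ q)"
    by (rule edge_path_replace) (use 1 c in auto)
  then show ?thesis by simp
qed

lemma step_props:
  assumes "htpy_step V adj Cells p q" "\<forall>c\<in>Cells. edge_loop V adj c"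
  shows "edge_path V adj p \<and> edge_path V adj q \<and> hd p = hd q \<and> last p = last q"
  using assms
proof cases
  case (backtrack pp u v qq)
  have uV: "u \<in> V" using backtrack by (auto simp: edge_path_def)
  have "edge_path V adj (pp @ [u] @ qq)"
    by (rule edge_path_replace[of V adj pp "[u,v,u]" qq]) (use backtrack uV in auto)
  moreover have "hd (pp @ [u, v, u] @ qq) = hd (pp @ [u] @ qq)" by (cases pp) auto
  moreover have "last (pp @ [u, v, u] @ qq) = last (pp @ [u] @ qq)" by (cases qq rule: rev_cases) auto
  ultimately show ?thesis using backtrack by simp
next
  case (cell c pp qq)
  then have "edge_path V adj (pp @ c @ [hd c] @ qq)" using edge_loop_ins assms(2) by blast
  moreover have "c \<noteq> []" using cell assms(2) by (auto simp: edge_loop_def edge_path_def)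
  moreover have "hd (pp @ [hd c] @ qq) = hd (pp @ c @ [hd c] @ qq)" using \<open>c \<noteq> []\<close> by (cases pp) auto
  moreover have "last (pp @ [hd c] @ qq) = last (pp @ c @ [hd c] @ qq)" by (cases qq rule: rev_cases) auto
  ultimately show ?thesis using cell by simp
qed

lemma hrel_props:
  assumes "hrel V adj Cells p q" "\<forall>c\<in>Cells. edge_loop V adj c"
  shows "p = q \<or> (edge_path V adj p \<and> edge_path V adj q \<and> hd p = hd q \<and> last p = last q)"
  using assms(1)
proof (induction rule: rtranclp_induct)
  case (step y z)
  then show ?case using step_props[OF _ assms(2)] by metis
qed simp

lemma hrel_edge_path:
  assumes "hrel V adj Cells p q" "\<forall>c\<in>Cells. edge_loop V adj c" "edge_path V adj p"
  shows "edge_path V adj q"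
  using hrel_props[OF assms(1,2)] assms(3) by auto

lemma hrel_sym:
  assumes "hrel V adj Cells p q" shows "hrel V adj Cells q p"
  using assms
proof (induction rule: rtranclp_induct)
  case (step y z)
  show ?case by (rule converse_rtranclp_into_rtranclp[of _ z y]) (use step in auto)
qed simp

lemma step_ctx:
  assumes "htpy_step V adj Cells p q" "edge_path V adj (a @ p @ b)"
  shows "htpy_step V adj Cells (a @ p @ b) (a @ q @ b)"
  using assms(1)
proof cases
  case (backtrack pp u v qq)
  then show ?thesis using assms(2) htpy_step.backtrack[of V adj "a@pp" u v "qq@b" Cells] by simp
next
  case (cell c pp qq)
  then show ?thesis using assms(2) htpy_step.cell[of c Cells V adj "a@pp" "qq@b"] by simp
qed

lemma hrel_ctx:
  assumes "hrel V adj Cells p q" "\<forall>c\<in>Cells. edge_loop V adj c" "edge_path V adj (a @ p @ b)"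
  shows "hrel V adj Cells (a @ p @ b) (a @ q @ b)"
  using assms(1)
proof (induction rule: rtranclp_induct)
  case (step y z)
  have ey: "edge_path V adj (a @ y @ b)"
    using hrel_edge_path[OF step.IH assms(2,3)] .
  from step.hyps(2) show ?case
  proof
    assume "htpy_step V adj Cells y z"
    then have "htpy_step V adj Cells (a @ y @ b) (a @ z @ b)" using step_ctx[OF _ ey] by blast
    then show ?thesis using rtranclp.rtrancl_into_rtrancl[OF step.IH] by blast
  next
    assume s: "htpy_step V adj Cells z y"
    from step_props[OF s assms(2)] have "edge_path V adj (a @ z @ b)"
      using edge_path_replace[OF ey, of z] by (auto simp: edge_path_def)
    then have "htpy_step V adj Cells (a @ z @ b) (a @ y @ b)" using step_ctx[OF s] by blast
    then show ?thesis using rtranclp.rtrancl_into_rtrancl[OF step.IH] by blast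
  qed
qed simp

lemma hrel_cancel:
  assumes "edge_path V adj (a @ (x # q) @ tl (rev (x # q)) @ b)" "\<forall>c\<in>Cells. edge_loop V adj c"
  shows "hrel V adj Cells (a @ (x # q) @ tl (rev (x # q)) @ b) (a @ [x] @ b)"
  using assms(1)
proof (induction q arbitrary: a x b)
  case Nil
  then show ?case by simp
next
  case (Cons y q)
  have eq: "a @ (x # y # q) @ tl (rev (x # y # q)) @ b = (a @ [x]) @ (y # q) @ tl (rev (y # q)) @ ([x] @ b)"
    by (cases "rev q") auto
  have 1: "hrel V adj Cells (a @ (x # y # q) @ tl (rev (x # y # q)) @ b) ((a @ [x]) @ [y] @ ([x] @ b))"
    using Cons.IH[of "a @ [x]" y] Cons.prems unfolding eq by blast
  have 2: "edge_path V adj (a @ [x,y,x] @ b)"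
    using hrel_edge_path[OF 1 assms(2) Cons.prems] by simp
  have "htpy_step V adj Cells (a @ [x,y,x] @ b) (a @ [x] @ b)"
    using htpy_step.backtrack[OF 2] .
  then show ?case using 1 by (simp add: rtranclp.rtrancl_into_rtrancl)
qed

lemma hrel_swap:
  assumes cells: "\<forall>c\<in>Cells. edge_loop V adj c"
    and R: "edge_path V adj R" "length R \<ge> 2"
    and Q: "edge_path V adj Q" "hd R = hd Q" "last R = last Q"
    and c0: "butlast (R @ tl (rev Q)) \<in> Cells"
    and e: "edge_path V adj (pre @ Q @ suf)"
  shows "hrel V adj Cells (pre @ Q @ suf) (pre @ R @ suf)"
proof -
  obtain x Q' where Qx: "Q = x # Q'" using Q by (cases Q) (auto simp: edge_path_def)
  define R' where "R' = tl R"
  have Rx: "R = x # R'" "R' \<noteq> []" using R Q Qx unfolding R'_def by (cases R; auto)+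
  define c0 where "c0 = butlast (R @ tl (rev Q))"
  have hc: "hd c0 = x" using Rx unfolding c0_def by (cases R'; simp add: butlast_append)
  have lastx: "last (R @ tl (rev Q)) = x"
    using Q Qx Rx by (cases "rev Q'") (auto simp: last_append)
  have c0x: "c0 @ [x] = R @ tl (rev Q)"
    unfolding c0_def using lastx Rx by (metis append_butlast_last_id append_is_Nil_conv list.distinct(1))
  have "edge_path V adj (pre @ [hd c0] @ (Q' @ suf))" using e Qx hc by simp
  then have s: "htpy_step V adj Cells (pre @ [x] @ (Q' @ suf)) (pre @ c0 @ [x] @ (Q' @ suf))"
    using htpy_step.cell[of c0 Cells V adj pre "Q' @ suf"] c0 hc unfolding c0_def by simp
  have eq: "pre @ c0 @ [x] @ (Q' @ suf) = (pre @ butlast R) @ (last Q # tl (rev Q)) @ tl (rev (last Q # tl (rev Q))) @ suf"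
  proof -
    have "rev Q = last Q # tl (rev Q)" using Qx by (metis Nil_is_rev_conv hd_rev list.collapse list.distinct(1))
    then have "tl (rev (last Q # tl (rev Q))) = Q'" using Qx by (metis list.sel(3) rev_rev_ident)
    moreover have "R = butlast R @ [last Q]" using Rx Q by (metis append_butlast_last_id list.distinct(1))
    ultimately show ?thesis using c0x
      by (metis append.assoc append_Cons self_append_conv2)
  qed
  have e2: "edge_path V adj (pre @ c0 @ [x] @ (Q' @ suf))"
    using step_props[OF s cells] by simp
  have "hrel V adj Cells (pre @ c0 @ [x] @ (Q' @ suf)) ((pre @ butlast R) @ [last Q] @ suf)"
  proof -
    have e3: "edge_path V adj ((pre @ butlast R) @ (last Q # tl (rev Q)) @ tl (rev (last Q # tl (rev Q))) @ suf)"
      using e2 unfolding eq .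
    show ?thesis unfolding eq by (rule hrel_cancel[OF e3 cells])
  qed
  moreover have "(pre @ butlast R) @ [last Q] @ suf = pre @ R @ suf"
    using Rx Q by (metis append.assoc append_Cons append_butlast_last_id list.distinct(1) self_append_conv2)
  ultimately show ?thesis using s Qx
    by (metis (no_types, lifting) append_Cons converse_rtranclp_into_rtranclp self_append_conv2)
qed



fun pt :: "('v \<Rightarrow> 'v \<Rightarrow> 'w list) \<Rightarrow> 'v \<Rightarrow> 'v list \<Rightarrow> 'w list" where
  "pt \<rho> x [] = []"
| "pt \<rho> x (y # w) = tl (\<rho> x y) @ pt \<rho> y w"

definition pmap :: "('v \<Rightarrow> 'w) \<Rightarrow> ('v \<Rightarrow> 'v \<Rightarrow> 'w list) \<Rightarrow> 'v list \<Rightarrow> 'w list" where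
  "pmap F \<rho> w = (case w of [] \<Rightarrow> [] | x # w' \<Rightarrow> F x # pt \<rho> x w')"

definition good :: "('v \<Rightarrow> 'w) \<Rightarrow> ('v \<Rightarrow> 'v \<Rightarrow> 'w list) \<Rightarrow> bool" where
  "good F \<rho> \<longleftrightarrow> (\<forall>x y. \<rho> x y \<noteq> [] \<and> hd (\<rho> x y) = F x \<and> last (\<rho> x y) = F y)"

lemma pt_append: "pt \<rho> x (a @ b) = pt \<rho> x a @ pt \<rho> (last (x # a)) b"
  by (induction a arbitrary: x) auto

lemma pmap_Cons: "pmap F \<rho> (x # w) = F x # pt \<rho> x w"
  by (simp add: pmap_def)

lemma pmap_single[simp]: "pmap F \<rho> [x] = [F x]"
  by (simp add: pmap_def)

lemma last_pt:
  assumes "good F \<rho>"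
  shows "last (F x # pt \<rho> x w) = F (last (x # w))"
proof (induction w arbitrary: x)
  case (Cons y w)
  show ?case
  proof (cases "pt \<rho> y w = []")
    case True
    have "last (F x # tl (\<rho> x y)) = F y" using assms unfolding good_def
      by (metis last_ConsL last_tl list.collapse)
    then show ?thesis using Cons.IH[of y] True by simp
  next
    case False
    then show ?thesis using Cons.IH[of y] by simp
  qed
qed simp

lemma pmap_app: "pmap F \<rho> (a @ [x] @ b) = pmap F \<rho> (a @ [x]) @ pt \<rho> x b"
  by (cases a) (auto simp: pmap_def pt_append)

lemma pmap_hd: "w \<noteq> [] \<Longrightarrow> hd (pmap F \<rho> w) = F (hd w)"
  by (cases w) (auto simp: pmap_def)

lemma pmap_last: assumes g: "good F \<rho>" shows "w \<noteq> [] \<Longrightarrow> last (pmap F \<rho> w) = F (last w)"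
  by (cases w) (simp_all add: pmap_def last_pt[OF g] del: last.simps)

lemma pmap_ne: "w \<noteq> [] \<Longrightarrow> pmap F \<rho> w \<noteq> []"
  by (cases w) (auto simp: pmap_def)

lemma edge_path_ConsD: "edge_path V adj (z # p) \<Longrightarrow> p \<noteq> [] \<Longrightarrow> edge_path V adj p \<and> adj z (hd p)"
  using edge_path_append[of V adj "[z]" p] by simp

lemma edge_path_sub: "edge_path V adj (a @ p @ b) \<Longrightarrow> p \<noteq> [] \<Longrightarrow> edge_path V adj p"
  unfolding edge_path_append by (cases "a = []"; cases "b = []") auto

lemma pt_edge:
  assumes g: "good F \<rho>" and FV: "F ` V1 \<subseteq> V2"
    and re: "\<And>x y. x \<in> V1 \<Longrightarrow> y \<in> V1 \<Longrightarrow> adj1 x y \<Longrightarrow> edge_path V2 adj2 (\<rho> x y)"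
  shows "edge_path V1 adj1 (x # w) \<Longrightarrow> edge_path V2 adj2 (F x # pt \<rho> x w)"
proof (induction w arbitrary: x)
  case Nil
  then show ?case using FV by auto
next
  case (Cons y w)
  have xy: "x \<in> V1" "y \<in> V1" "adj1 x y" "edge_path V1 adj1 (y # w)"
    using Cons.prems by (auto simp: edge_path_Cons2 edge_path_def)
  have IH: "edge_path V2 adj2 (F y # pt \<rho> y w)" using Cons.IH xy by blast
  have r: "edge_path V2 adj2 (\<rho> x y)" using re xy by blast
  have rx: "\<rho> x y = F x # tl (\<rho> x y)" using g unfolding good_def by (metis list.collapse)
  have rl: "last (\<rho> x y) = F y" using g unfolding good_def by blast
  have "edge_path V2 adj2 (\<rho> x y @ pt \<rho> y w)"
  proof (cases "pt \<rho> y w = []")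
    case True then show ?thesis using r by simp
  next
    case False
    then have "edge_path V2 adj2 (pt \<rho> y w)" "adj2 (F y) (hd (pt \<rho> y w))"
      using edge_path_ConsD[OF IH] by auto
    then show ?thesis using r rl False unfolding edge_path_append by (auto simp: edge_path_def)
  qed
  then show ?case using rx by (metis append_Cons pt.simps(2))
qed

lemma pmap_edge:
  assumes "good F \<rho>" "F ` V1 \<subseteq> V2"
    "\<And>x y. x \<in> V1 \<Longrightarrow> y \<in> V1 \<Longrightarrow> adj1 x y \<Longrightarrow> edge_path V2 adj2 (\<rho> x y)"
    "edge_path V1 adj1 w"
  shows "edge_path V2 adj2 (pmap F \<rho> w)"
  using assms pt_edge[OF assms(1-3)] by (cases w) (auto simp: pmap_def edge_path_def)

definition nc :: "('a + 'b) list \<Rightarrow> nat" where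
  "nc w = length (filter is_cone_vertex w)"

lemma nc_simps[simp]: "nc [] = 0" "nc (x # w) = (if is_cone_vertex x then 1 else 0) + nc w"
  "nc (a @ b) = nc a + nc b" "nc (rev a) = nc a"
  by (auto simp: nc_def rev_filter[symmetric])

lemma nc_pt:
  assumes "\<And>x y. nc (tl (\<rho> x y)) \<le> (if is_cone_vertex y then 1 else 0)"
  shows "nc (pt \<rho> x w) \<le> nc w"
proof (induction w arbitrary: x)
  case (Cons y w)
  have "nc (pt \<rho> y w) \<le> nc w" by (rule Cons.IH)
  with assms[of x y] show ?case by simp
qed simp

lemma length_pt:
  assumes "\<And>x y. length (tl (\<rho> x y)) \<le> K"
  shows "length (pt \<rho> x w) \<le> K * length w"
proof (induction w arbitrary: x)
  case (Cons y w)
  have "length (pt \<rho> y w) \<le> K * length w" by (rule Cons.IH)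
  with assms[of x y] show ?case by simp
qed simp

lemma transfer_ins:
  assumes g: "good F \<rho>" and FV: "F ` VH \<subseteq> VG"
    and re: "\<And>x y. x \<in> VH \<Longrightarrow> y \<in> VH \<Longrightarrow> adjH x y \<Longrightarrow> edge_path VG adjG (\<rho> x y)"
    and ins: "\<And>x c. edge_path VH adjH (x # c @ [x]) \<Longrightarrow> (x # c \<in> CH \<or> (\<exists>v. c = [v])) \<Longrightarrow>
               pt \<rho> x (c @ [x]) \<noteq> [] \<Longrightarrow> F x # butlast (pt \<rho> x (c @ [x])) \<in> CG"
    and e: "edge_path VH adjH (a @ (x # c) @ [x] @ b)" and cc: "x # c \<in> CH \<or> (\<exists>v. c = [v])"
  shows "hrel VG adjG CG (pmap F \<rho> (a @ [x] @ b)) (pmap F \<rho> (a @ (x # c) @ [x] @ b))"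
proof -
  have e': "edge_path VH adjH (a @ (x # c @ [x]) @ b)" using e by simp
  have ea: "edge_path VH adjH (a @ [x] @ b)"
    by (rule edge_path_replace[OF e', of "[x]"]) (use e in \<open>auto simp: edge_path_def\<close>)
  have ec: "edge_path VH adjH (x # c @ [x])" using edge_path_sub[of VH adjH a "x # c @ [x]" b] e by simp
  have 1: "pmap F \<rho> (a @ (x # c) @ [x] @ b) = pmap F \<rho> (a @ [x]) @ pt \<rho> x (c @ [x]) @ pt \<rho> x b"
    using pmap_app[of F \<rho> "a @ (x # c)" x b] pmap_app[of F \<rho> a x "c @ [x]"]
    by (simp add: pt_append)
  have 2: "pmap F \<rho> (a @ [x] @ b) = pmap F \<rho> (a @ [x]) @ pt \<rho> x b"
    by (rule pmap_app)
  define A where "A = butlast (pmap F \<rho> (a @ [x]))"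
  have 3: "pmap F \<rho> (a @ [x]) = A @ [F x]"
    unfolding A_def using pmap_last[OF g, of "a @ [x]"] pmap_ne[of "a @ [x]" F \<rho>]
    by (metis append_butlast_last_id last_snoc snoc_eq_iff_butlast)
  show ?thesis
  proof (cases "pt \<rho> x (c @ [x]) = []")
    case True
    then show ?thesis using 1 2 by simp
  next
    case False
    define c' where "c' = butlast (pt \<rho> x (c @ [x]))"
    have "last (F x # pt \<rho> x (c @ [x])) = F x" using last_pt[OF g, of x "c @ [x]"] by simp
    then have 4: "pt \<rho> x (c @ [x]) = c' @ [F x]" unfolding c'_def using False
      by (metis append_butlast_last_id last_ConsR)
    have cell: "F x # c' \<in> CG" using ins[OF ec cc False] unfolding c'_def .
    have ep: "edge_path VG adjG (A @ [hd (F x # c')] @ pt \<rho> x b)"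
      using pmap_edge[OF g FV re ea] 2 3 by simp
    have "htpy_step VG adjG CG (A @ [hd (F x # c')] @ pt \<rho> x b) (A @ (F x # c') @ [hd (F x # c')] @ pt \<rho> x b)"
      by (rule htpy_step.cell[OF cell ep])
    then have "hrel VG adjG CG (A @ [hd (F x # c')] @ pt \<rho> x b) (A @ (F x # c') @ [hd (F x # c')] @ pt \<rho> x b)"
      by (simp add: r_into_rtranclp)
    then show ?thesis using 1 2 3 4 by simp
  qed
qed

lemma transfer:
  assumes g: "good F \<rho>" and FV: "F ` VH \<subseteq> VG"
    and re: "\<And>x y. x \<in> VH \<Longrightarrow> y \<in> VH \<Longrightarrow> adjH x y \<Longrightarrow> edge_path VG adjG (\<rho> x y)"
    and ins: "\<And>x c. edge_path VH adjH (x # c @ [x]) \<Longrightarrow> (x # c \<in> CH \<or> (\<exists>v. c = [v])) \<Longrightarrow>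
               pt \<rho> x (c @ [x]) \<noteq> [] \<Longrightarrow> F x # butlast (pt \<rho> x (c @ [x])) \<in> CG"
    and cH: "\<forall>c\<in>CH. edge_loop VH adjH c"
    and h: "hrel VH adjH CH p q"
  shows "hrel VG adjG CG (pmap F \<rho> p) (pmap F \<rho> q)"
proof -
  have st: "hrel VG adjG CG (pmap F \<rho> p) (pmap F \<rho> q)" if s: "htpy_step VH adjH CH p q" for p q
    using s
  proof cases
    case (backtrack pp u v qq)
    have "hrel VG adjG CG (pmap F \<rho> (pp @ [u] @ qq)) (pmap F \<rho> (pp @ (u # [v]) @ [u] @ qq))"
      by (rule transfer_ins[OF g FV re ins]) (use backtrack in auto)
    then show ?thesis using backtrack hrel_sym by simp
  next
    case (cell c pp qq)
    have cne: "c \<noteq> []" using cH cell by (auto simp: edge_loop_def edge_path_def)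
    then have cx: "c = hd c # tl c" by simp
    have "edge_path VH adjH (pp @ c @ [hd c] @ qq)" using edge_loop_ins cell cH by blast
    then have "hrel VG adjG CG (pmap F \<rho> (pp @ [hd c] @ qq)) (pmap F \<rho> (pp @ (hd c # tl c) @ [hd c] @ qq))"
      by (intro transfer_ins[OF g FV re ins]) (use cell cx in auto)
    then show ?thesis using cell cx by simp
  qed
  from h show ?thesis
  proof (induction rule: rtranclp_induct)
    case (step y z)
    have "hrel VG adjG CG (pmap F \<rho> y) (pmap F \<rho> z)"
      using step.hyps(2) st hrel_sym by blast
    then show ?case using step.IH by (meson rtranclp_trans)
  qed simp
qed



lemma edge_path_appI:
  "edge_path V adj p \<Longrightarrow> edge_path V adj q \<Longrightarrow> adj (last p) (hd q) \<Longrightarrow> edge_path V adj (p @ q)"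
  unfolding edge_path_succ successively_append_iff by auto

lemma edge_path_join:
  assumes "edge_path V adj p" "edge_path V adj q" "last p = hd q"
  shows "edge_path V adj (p @ tl q)" "last (p @ tl q) = last q" "hd (p @ tl q) = hd p"
proof -
  obtain q0 qs where q: "q = q0 # qs" using assms(2) by (cases q) (auto simp: edge_path_def)
  have p: "p \<noteq> []" using assms(1) by (auto simp: edge_path_def)
  show "edge_path V adj (p @ tl q)"
  proof (cases "qs = []")
    case True then show ?thesis using assms q by simp
  next
    case False
    have "edge_path V adj qs \<and> adj q0 (hd qs)" using edge_path_ConsD[of V adj q0 qs] assms(2) q False by simp
    then show ?thesis using edge_path_appI[OF assms(1), of qs] assms(3) q by simp
  qed
  show "last (p @ tl q) = last q" using assms(3) p q by (cases qs) auto
  show "hd (p @ tl q) = hd p" using p by simp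
qed

lemma ladder:
  assumes symG: "\<And>x y. adjG x y \<Longrightarrow> adjG y x"
    and cG: "\<forall>c\<in>CG. edge_loop VG adjG c"
    and g\<Phi>: "good \<Phi> \<tau>" and \<Phi>V: "\<Phi> ` VG \<subseteq> VH"
    and \<tau>e: "\<And>x y. x \<in> VG \<Longrightarrow> y \<in> VG \<Longrightarrow> adjG x y \<Longrightarrow> edge_path VH adjH (\<tau> x y)"
    and g\<Psi>: "good \<Psi> \<rho>" and \<Psi>V: "\<Psi> ` VH \<subseteq> VG"
    and \<rho>e: "\<And>x y. x \<in> VH \<Longrightarrow> y \<in> VH \<Longrightarrow> adjH x y \<Longrightarrow> edge_path VG adjG (\<rho> x y)"
    and \<sigma>: "\<And>v. v \<in> VG \<Longrightarrow> edge_path VG adjG (\<sigma> v) \<and> hd (\<sigma> v) = v \<and> last (\<sigma> v) = \<Psi> (\<Phi> v)"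
    and sq: "\<And>x z. x \<in> VG \<Longrightarrow> z \<in> VG \<Longrightarrow> adjG x z \<Longrightarrow>
        butlast ((x # \<sigma> z) @ tl (rev (\<sigma> x @ tl (pmap \<Psi> \<rho> (pmap \<Phi> \<tau> [x, z]))))) \<in> CG"
  shows "edge_path VG adjG (x # w) \<Longrightarrow>
    hrel VG adjG CG (x # w @ tl (\<sigma> (last (x # w)))) (\<sigma> x @ tl (pmap \<Psi> \<rho> (pmap \<Phi> \<tau> (x # w))))"
proof (induction w arbitrary: x)
  case Nil
  have "x \<in> VG" using Nil by simp
  then have "\<sigma> x = x # tl (\<sigma> x)" using \<sigma>[of x] by (metis edge_path_def list.collapse)
  then show ?case by (simp add: pmap_def)
next
  case (Cons z w)
  let ?W = "\<lambda>p. pmap \<Psi> \<rho> (pmap \<Phi> \<tau> p)"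
  have xz: "x \<in> VG" "z \<in> VG" "adjG x z" and ez: "edge_path VG adjG (z # w)"
    using Cons.prems by (auto simp: edge_path_Cons2 edge_path_def)
  have Wedge: "edge_path VG adjG (?W p)" if "edge_path VG adjG p" for p
  proof -
    have "edge_path VH adjH (pmap \<Phi> \<tau> p)" by (rule pmap_edge[OF g\<Phi> \<Phi>V \<tau>e that])
    then show ?thesis using pmap_edge[OF g\<Psi> \<Psi>V] \<rho>e by blast
  qed
  have Whd: "hd (?W p) = \<Psi> (\<Phi> (hd p))" if "p \<noteq> []" for p
    using that by (simp add: pmap_hd pmap_ne)
  have Wlast: "last (?W p) = \<Psi> (\<Phi> (last p))" if "p \<noteq> []" for p
    using that by (simp add: pmap_last[OF g\<Psi>] pmap_last[OF g\<Phi>] pmap_ne)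
  have Wne: "?W p \<noteq> []" if "p \<noteq> []" for p using that by (simp add: pmap_ne)
  let ?l = "last (z # w)"
  have lV: "?l \<in> VG" using ez by (auto simp: edge_path_def)
  have IH: "hrel VG adjG CG (z # w @ tl (\<sigma> ?l)) (\<sigma> z @ tl (?W (z # w)))"
    using Cons.IH ez by blast
  have e1: "edge_path VG adjG ([x] @ (z # w @ tl (\<sigma> ?l)) @ [])"
    using edge_path_join(1)[OF Cons.prems, of "\<sigma> ?l"] \<sigma>[OF lV] by simp
  have 1: "hrel VG adjG CG (x # z # w @ tl (\<sigma> ?l)) ([x] @ (\<sigma> z @ tl (?W (z # w))))"
    using hrel_ctx[OF IH cG e1] by simp
  define U where "U = pmap \<Phi> \<tau> [x, z]"
  have U: "U \<noteq> []" "last U = \<Phi> z" unfolding U_def using pmap_last[OF g\<Phi>, of "[x,z]"] pmap_ne[of "[x,z]"] by auto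
  have "pmap \<Phi> \<tau> (x # z # w) = U @ pt \<tau> z w"
    unfolding U_def using pmap_app[of \<Phi> \<tau> "[x]" z w] by simp
  also have "\<dots> = butlast U @ [\<Phi> z] @ pt \<tau> z w" using U by (metis append.assoc append_butlast_last_id append_Cons self_append_conv2)
  finally have "?W (x # z # w) = pmap \<Psi> \<rho> (butlast U @ [\<Phi> z]) @ pt \<rho> (\<Phi> z) (pt \<tau> z w)"
    using pmap_app[of \<Psi> \<rho> "butlast U" "\<Phi> z" "pt \<tau> z w"] by simp
  also have "butlast U @ [\<Phi> z] = U" using U by (metis append_butlast_last_id)
  finally have W1: "?W (x # z # w) = ?W [x, z] @ tl (?W (z # w))"
    unfolding U_def by (simp add: pmap_Cons)
  define Q where "Q = \<sigma> x @ tl (?W [x, z])"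
  define R where "R = x # \<sigma> z"
  define suf where "suf = tl (?W (z # w))"
  have sx: "edge_path VG adjG (\<sigma> x)" "hd (\<sigma> x) = x" "last (\<sigma> x) = \<Psi> (\<Phi> x)" using \<sigma> xz by auto
  have sz: "edge_path VG adjG (\<sigma> z)" "hd (\<sigma> z) = z" "last (\<sigma> z) = \<Psi> (\<Phi> z)" using \<sigma> xz by auto
  have exz: "edge_path VG adjG [x, z]" using xz by (simp add: edge_path_Cons2)
  have Qe: "edge_path VG adjG Q" "last Q = \<Psi> (\<Phi> z)" "hd Q = x"
    unfolding Q_def using edge_path_join[OF sx(1) Wedge[OF exz]] sx Whd[of "[x,z]"] Wlast[of "[x,z]"] by auto
  have Re: "edge_path VG adjG R" "length R \<ge> 2" "hd R = x" "last R = \<Psi> (\<Phi> z)"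
    unfolding R_def using sz xz edge_path_append[of VG adjG "[x]" "\<sigma> z"]
    by (auto simp: edge_path_def) (metis Suc_le_eq length_greater_0_conv)
  have QS: "Q @ suf = \<sigma> x @ tl (?W (x # z # w))"
    unfolding Q_def suf_def W1 using Wne[of "[x,z]"] by simp
  have e2: "edge_path VG adjG ([] @ Q @ suf)"
    unfolding QS using edge_path_join(1)[OF sx(1) Wedge[OF Cons.prems]] sx Whd by simp
  have 2: "hrel VG adjG CG ([] @ Q @ suf) ([] @ R @ suf)"
    by (rule hrel_swap[OF cG Re(1,2) Qe(1) _ _ _ e2])
      (use Re Qe sq[OF xz] in \<open>auto simp: Q_def R_def\<close>)
  have "[x] @ (\<sigma> z @ tl (?W (z # w))) = [] @ R @ suf" unfolding R_def suf_def by simp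
  then show ?case using 1 hrel_sym[OF 2] QS by (simp add: rtranclp_trans)
qed

lemma abstract_loops:
  assumes symG: "\<And>x y. adjG x y \<Longrightarrow> adjG y x"
    and cG: "\<forall>c\<in>CG. edge_loop VG adjG c"
    and cH: "\<forall>c\<in>CH. edge_loop VH adjH c"
    and scH: "\<And>p. edge_path VH adjH p \<Longrightarrow> hd p = last p \<Longrightarrow> hrel VH adjH CH p [hd p]"
    and g\<Phi>: "good \<Phi> \<tau>" and \<Phi>V: "\<Phi> ` VG \<subseteq> VH"
    and \<tau>e: "\<And>x y. x \<in> VG \<Longrightarrow> y \<in> VG \<Longrightarrow> adjG x y \<Longrightarrow> edge_path VH adjH (\<tau> x y)"
    and g\<Psi>: "good \<Psi> \<rho>" and \<Psi>V: "\<Psi> ` VH \<subseteq> VG"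
    and \<rho>e: "\<And>x y. x \<in> VH \<Longrightarrow> y \<in> VH \<Longrightarrow> adjH x y \<Longrightarrow> edge_path VG adjG (\<rho> x y)"
    and ins: "\<And>x c. edge_path VH adjH (x # c @ [x]) \<Longrightarrow> (x # c \<in> CH \<or> (\<exists>v. c = [v])) \<Longrightarrow>
               pt \<rho> x (c @ [x]) \<noteq> [] \<Longrightarrow> \<Psi> x # butlast (pt \<rho> x (c @ [x])) \<in> CG"
    and \<sigma>: "\<And>v. v \<in> VG \<Longrightarrow> edge_path VG adjG (\<sigma> v) \<and> hd (\<sigma> v) = v \<and> last (\<sigma> v) = \<Psi> (\<Phi> v)"
    and sq: "\<And>x z. x \<in> VG \<Longrightarrow> z \<in> VG \<Longrightarrow> adjG x z \<Longrightarrow>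
        butlast ((x # \<sigma> z) @ tl (rev (\<sigma> x @ tl (pmap \<Psi> \<rho> (pmap \<Phi> \<tau> [x, z]))))) \<in> CG"
    and \<gamma>: "edge_path VG adjG \<gamma>" "hd \<gamma> = last \<gamma>"
  shows "hrel VG adjG CG \<gamma> [hd \<gamma>]"
proof -
  obtain x w where xw: "\<gamma> = x # w" using \<gamma> by (cases \<gamma>) (auto simp: edge_path_def)
  have xV: "x \<in> VG" using \<gamma> xw by (auto simp: edge_path_def)
  have lx: "last \<gamma> = x" using \<gamma> xw by simp
  define s where "s = \<sigma> x"
  have s: "edge_path VG adjG s" "hd s = x" "last s = \<Psi> (\<Phi> x)" using \<sigma>[OF xV] s_def by auto
  define W where "W = pmap \<Psi> \<rho> (pmap \<Phi> \<tau> \<gamma>)"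
  have 1: "hrel VG adjG CG (\<gamma> @ tl s) (s @ tl W)"
    using ladder[OF symG cG g\<Phi> \<Phi>V \<tau>e g\<Psi> \<Psi>V \<rho>e \<sigma> sq, of x w] \<gamma> xw lx
    unfolding s_def W_def by simp
  have ph: "edge_path VH adjH (pmap \<Phi> \<tau> \<gamma>)" by (rule pmap_edge[OF g\<Phi> \<Phi>V \<tau>e \<gamma>(1)])
  have phl: "hd (pmap \<Phi> \<tau> \<gamma>) = last (pmap \<Phi> \<tau> \<gamma>)"
    using pmap_hd[of \<gamma> \<Phi> \<tau>] pmap_last[OF g\<Phi>, of \<gamma>] xw \<gamma>(2) by simp
  have "hrel VH adjH CH (pmap \<Phi> \<tau> \<gamma>) [\<Phi> x]"
    using scH[OF ph phl] pmap_hd[of \<gamma> \<Phi> \<tau>] xw by simp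
  then have 2: "hrel VG adjG CG W [\<Psi> (\<Phi> x)]"
    using transfer[OF g\<Psi> \<Psi>V \<rho>e ins cH] unfolding W_def by fastforce
  have We: "edge_path VG adjG W" unfolding W_def
    using pmap_edge[OF g\<Psi> \<Psi>V] \<rho>e ph by blast
  have Wh: "hd W = \<Psi> (\<Phi> x)" unfolding W_def using xw by (simp add: pmap_hd pmap_ne)
  define bs where "bs = butlast s"
  have sb: "s = bs @ [\<Psi> (\<Phi> x)]" using s unfolding bs_def by (metis append_butlast_last_id edge_path_def)
  obtain w0 ws where Wc: "W = w0 # ws" using We by (cases W) (auto simp: edge_path_def)
  have w0: "w0 = \<Psi> (\<Phi> x)" using Wh Wc by simp
  have sW: "s @ tl W = bs @ W @ []" using Wc w0 sb by simp
  have e3: "edge_path VG adjG (bs @ W @ [])" using sW edge_path_join(1)[OF s(1) We] s Wh by simp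
  have 3: "hrel VG adjG CG (s @ tl W) s"
    using hrel_ctx[OF 2 cG e3] sW sb by simp
  have 4: "hrel VG adjG CG (\<gamma> @ tl s) s" using 1 3 by (meson rtranclp_trans)
  have rs: "edge_path VG adjG (rev s)" using s edge_path_rev[of adjG VG s] symG by blast
  have gs: "edge_path VG adjG (\<gamma> @ tl s)" "last (\<gamma> @ tl s) = last s"
    using edge_path_join[OF \<gamma>(1) s(1)] s lx by auto
  have e5: "edge_path VG adjG ([] @ (\<gamma> @ tl s) @ tl (rev s))"
    using edge_path_join(1)[OF gs(1) rs] gs(2) by (simp add: hd_rev)
  have 5: "hrel VG adjG CG (\<gamma> @ tl s @ tl (rev s)) (s @ tl (rev s))"
    using hrel_ctx[OF 4 cG e5] by simp
  obtain s0 ss where s0: "s = s0 # ss" using s by (cases s) (auto simp: edge_path_def)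
  have s0x: "s0 = x" using s s0 by simp
  have e6: "edge_path VG adjG ([] @ (s0 # ss) @ tl (rev (s0 # ss)) @ [])"
    using edge_path_join(1)[OF s(1) rs] s0 by (simp add: hd_rev)
  have 6: "hrel VG adjG CG (s @ tl (rev s)) [x]"
    using hrel_cancel[OF e6 cG] s0 s0x by simp
  define bg where "bg = butlast \<gamma>"
  have gb: "\<gamma> = bg @ [x]" using lx xw unfolding bg_def by (metis append_butlast_last_id list.distinct(1))
  have eq7: "\<gamma> @ tl s @ tl (rev s) = bg @ (s0 # ss) @ tl (rev (s0 # ss)) @ []"
    using gb s0 s0x by simp
  have e7: "edge_path VG adjG (bg @ (s0 # ss) @ tl (rev (s0 # ss)) @ [])"
    using e5 eq7 by simp
  have 7: "hrel VG adjG CG (\<gamma> @ tl s @ tl (rev s)) \<gamma>"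
    using hrel_cancel[OF e7 cG] eq7 gb s0x by simp
  have "hrel VG adjG CG \<gamma> (\<gamma> @ tl s @ tl (rev s))" by (rule hrel_sym[OF 7])
  then have "hrel VG adjG CG \<gamma> (s @ tl (rev s))" using 5 by (rule rtranclp_trans)
  then have "hrel VG adjG CG \<gamma> [x]" using 6 by (rule rtranclp_trans)
  then show ?thesis using xw by simp
qed



fun cp :: "('a, 'c) monoid_scheme \<Rightarrow> 'a \<Rightarrow> 'a list \<Rightarrow> ('a + 'x) list" where
  "cp G g [] = [Inl g]"
| "cp G g (s # w) = Inl g # cp G (g \<otimes>\<^bsub>G\<^esub> s) w"

lemma foldr_closed:
  assumes "group G" "set w \<subseteq> carrier G"
  shows "foldr (\<lambda>a b. a \<otimes>\<^bsub>G\<^esub> b) w \<one>\<^bsub>G\<^esub> \<in> carrier G"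
proof -
  interpret G: group G by fact
  show ?thesis using assms(2) by (induction w) auto
qed

lemma foldr_mult:
  assumes "group G" "set w \<subseteq> carrier G" "y \<in> carrier G"
  shows "foldr (\<lambda>a b. a \<otimes>\<^bsub>G\<^esub> b) w y = foldr (\<lambda>a b. a \<otimes>\<^bsub>G\<^esub> b) w \<one>\<^bsub>G\<^esub> \<otimes>\<^bsub>G\<^esub> y"
proof -
  interpret G: group G by fact
  show ?thesis using assms(2)
  proof (induction w)
    case Nil then show ?case using assms(3) by simp
  next
    case (Cons s w)
    then have "s \<in> carrier G" "set w \<subseteq> carrier G" by auto
    then show ?case using Cons foldr_closed[OF assms(1)] assms(3) by (simp add: G.m_assoc)
  qed
qed

lemma cp_props:
  fixes I :: "'i set"
  assumes grp: "group G" and S: "S \<subseteq> carrier G"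
  shows "g \<in> carrier G \<Longrightarrow> set w \<subseteq> S \<union> (\<lambda>s. inv\<^bsub>G\<^esub> s) ` S \<Longrightarrow>
    edge_path (cone_vertices G I P) (cone_adj G S) (cp G g w :: ('a + ('i \<times> 'a set)) list) \<and> hd (cp G g w :: ('a + ('i \<times> 'a set)) list) = Inl g \<and>
    last (cp G g w :: ('a + ('i \<times> 'a set)) list) = Inl (g \<otimes>\<^bsub>G\<^esub> foldr (\<lambda>a b. a \<otimes>\<^bsub>G\<^esub> b) w \<one>\<^bsub>G\<^esub>) \<and>
    length (cp G g w :: ('a + ('i \<times> 'a set)) list) = Suc (length w) \<and> nc (cp G g w :: ('a + ('i \<times> 'a set)) list) = 0"
proof (induction w arbitrary: g)
  case Nil
  interpret G: group G by fact
  show ?case using Nil by (simp add: cone_vertices_def is_cone_vertex_def)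
next
  case (Cons s w)
  interpret G: group G by fact
  have sS: "s \<in> S \<union> (\<lambda>s. inv\<^bsub>G\<^esub> s) ` S" and wS: "set w \<subseteq> S \<union> (\<lambda>s. inv\<^bsub>G\<^esub> s) ` S" using Cons.prems by auto
  have sC: "s \<in> carrier G" using sS S by auto
  have wC: "set w \<subseteq> carrier G" using wS S by auto
  have gs: "g \<otimes>\<^bsub>G\<^esub> s \<in> carrier G" using sC Cons.prems by simp
  note IH = Cons.IH[OF gs wS]
  have adj: "cone_adj G S (Inl g) (Inl (g \<otimes>\<^bsub>G\<^esub> s))"
  proof -
    have e1: "inv\<^bsub>G\<^esub> g \<otimes>\<^bsub>G\<^esub> (g \<otimes>\<^bsub>G\<^esub> s) = s" using sC Cons.prems by (simp add: G.m_assoc[symmetric])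
    show ?thesis
    proof (cases "s \<in> S")
      case True then show ?thesis using e1 by (simp add: cone_adj_def)
    next
      case False
      then obtain t where t: "t \<in> S" "s = inv\<^bsub>G\<^esub> t" using sS by auto
      have tC: "t \<in> carrier G" using t S by auto
      have "inv\<^bsub>G\<^esub> (g \<otimes>\<^bsub>G\<^esub> s) \<otimes>\<^bsub>G\<^esub> g = t"
        using tC Cons.prems t by (simp add: G.inv_mult_group G.m_assoc)
      then show ?thesis using t by (simp add: cone_adj_def)
    qed
  qed
  have gV: "Inl g \<in> cone_vertices G I P" using Cons.prems by (simp add: cone_vertices_def)
  have "edge_path (cone_vertices G I P) (cone_adj G S) (Inl g # cp G (g \<otimes>\<^bsub>G\<^esub> s) w)"
  proof -
    have h: "hd (cp G (g \<otimes>\<^bsub>G\<^esub> s) w :: ('a + ('i \<times> 'a set)) list) = Inl (g \<otimes>\<^bsub>G\<^esub> s)"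
      "edge_path (cone_vertices G I P) (cone_adj G S) (cp G (g \<otimes>\<^bsub>G\<^esub> s) w)" using IH by auto
    have "edge_path (cone_vertices G I P) (cone_adj G S) ([Inl g] @ cp G (g \<otimes>\<^bsub>G\<^esub> s) w)"
      by (rule edge_path_appI) (use h gV adj in auto)
    then show ?thesis by simp
  qed
  moreover have "(g \<otimes>\<^bsub>G\<^esub> s) \<otimes>\<^bsub>G\<^esub> foldr (\<lambda>a b. a \<otimes>\<^bsub>G\<^esub> b) w \<one>\<^bsub>G\<^esub> =
      g \<otimes>\<^bsub>G\<^esub> foldr (\<lambda>a b. a \<otimes>\<^bsub>G\<^esub> b) (s # w) \<one>\<^bsub>G\<^esub>"
    using foldr_closed[OF grp wC] sC Cons.prems by (simp add: G.m_assoc)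
  moreover have "(cp G (g \<otimes>\<^bsub>G\<^esub> s) w :: ('a + ('i \<times> 'a set)) list) \<noteq> []" using IH by (auto simp: edge_path_def)
  ultimately show ?case using IH by (simp add: is_cone_vertex_def)
qed

lemma word_exists:
  assumes grp: "group G" and fg: "fin_gen_set G S" and x: "x \<in> carrier G"
  shows "\<exists>w. set w \<subseteq> S \<union> (\<lambda>s. inv\<^bsub>G\<^esub> s) ` S \<and> foldr (\<lambda>a b. a \<otimes>\<^bsub>G\<^esub> b) w \<one>\<^bsub>G\<^esub> = x"
proof -
  interpret G: group G by fact
  have S: "S \<subseteq> carrier G" using fg by (simp add: fin_gen_set_def)
  have "x \<in> generate G S" using fg x by (simp add: fin_gen_set_def)
  then show ?thesis
  proof (induction rule: generate.induct)
    case one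
    then show ?case by (intro exI[of _ "[]"]) simp
  next
    case (incl h)
    then show ?case using S by (intro exI[of _ "[h]"]) auto
  next
    case (inv h)
    then show ?case using S by (intro exI[of _ "[inv\<^bsub>G\<^esub> h]"]) auto
  next
    case (eng h1 h2)
    then obtain w1 w2 where w: "set w1 \<subseteq> S \<union> (\<lambda>s. inv\<^bsub>G\<^esub> s) ` S" "foldr (\<lambda>a b. a \<otimes>\<^bsub>G\<^esub> b) w1 \<one>\<^bsub>G\<^esub> = h1"
      "set w2 \<subseteq> S \<union> (\<lambda>s. inv\<^bsub>G\<^esub> s) ` S" "foldr (\<lambda>a b. a \<otimes>\<^bsub>G\<^esub> b) w2 \<one>\<^bsub>G\<^esub> = h2" by blast
    have c1: "set w1 \<subseteq> carrier G" using w(1) S by auto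
    have c2: "set w2 \<subseteq> carrier G" using w(3) S by auto
    have "foldr (\<lambda>a b. a \<otimes>\<^bsub>G\<^esub> b) (w1 @ w2) \<one>\<^bsub>G\<^esub> = h1 \<otimes>\<^bsub>G\<^esub> h2"
      using foldr_mult[OF grp c1 foldr_closed[OF grp c2]] w by simp
    then show ?case using w by (intro exI[of _ "w1 @ w2"]) auto
  qed
qed

lemma dist_path:
  assumes grp: "group G" and fg: "fin_gen_set G S" and g: "g \<in> carrier G" "g' \<in> carrier G"
  shows "\<exists>p. edge_path (cone_vertices G I P) (cone_adj G S) p \<and> hd p = Inl g \<and> last p = Inl g' \<and>
    length p = Suc (word_dist G S g g') \<and> nc p = 0"
proof -
  interpret G: group G by fact
  have S: "S \<subseteq> carrier G" using fg by (simp add: fin_gen_set_def)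
  let ?x = "inv\<^bsub>G\<^esub> g \<otimes>\<^bsub>G\<^esub> g'"
  define Pn where "Pn = (\<lambda>n. \<exists>w. length w = n \<and> set w \<subseteq> S \<union> (\<lambda>s. inv\<^bsub>G\<^esub> s) ` S \<and> foldr (\<lambda>a b. a \<otimes>\<^bsub>G\<^esub> b) w \<one>\<^bsub>G\<^esub> = ?x)"
  have ex: "\<exists>n. Pn n" unfolding Pn_def using word_exists[OF grp fg, of ?x] g by auto
  have "Pn (LEAST n. Pn n)" by (rule LeastI_ex[OF ex])
  moreover have "(LEAST n. Pn n) = word_dist G S g g'" unfolding word_dist_def word_length_def Pn_def by simp
  ultimately obtain w where w: "length w = word_dist G S g g'" "set w \<subseteq> S \<union> (\<lambda>s. inv\<^bsub>G\<^esub> s) ` S"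
    "foldr (\<lambda>a b. a \<otimes>\<^bsub>G\<^esub> b) w \<one>\<^bsub>G\<^esub> = ?x"
    unfolding Pn_def by auto
  have "g \<otimes>\<^bsub>G\<^esub> ?x = g'" using g by (simp add: G.m_assoc[symmetric])
  then show ?thesis using cp_props[OF grp S, of g w I P] g w by (intro exI[of _ "cp G g w"]) auto
qed

lemma adj_dist:
  assumes grp: "group G" and S: "S \<subseteq> carrier G" and g: "g \<in> carrier G" "g' \<in> carrier G"
    and a: "cone_adj G S (Inl g) (Inl g')"
  shows "word_dist G S g g' \<le> 1"
proof -
  interpret G: group G by fact
  let ?x = "inv\<^bsub>G\<^esub> g \<otimes>\<^bsub>G\<^esub> g'"
  have "\<exists>s. s \<in> S \<union> (\<lambda>s. inv\<^bsub>G\<^esub> s) ` S \<and> s = ?x"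
  proof (cases "?x \<in> S")
    case True then show ?thesis by blast
  next
    case False
    then have t: "inv\<^bsub>G\<^esub> g' \<otimes>\<^bsub>G\<^esub> g \<in> S" using a by (simp add: cone_adj_def)
    have "inv\<^bsub>G\<^esub> (inv\<^bsub>G\<^esub> g' \<otimes>\<^bsub>G\<^esub> g) = ?x" using g by (simp add: G.inv_mult_group)
    then show ?thesis using t by blast
  qed
  then obtain s where s: "s \<in> S \<union> (\<lambda>s. inv\<^bsub>G\<^esub> s) ` S" "s = ?x" by blast
  have "foldr (\<lambda>a b. a \<otimes>\<^bsub>G\<^esub> b) [s] \<one>\<^bsub>G\<^esub> = ?x" using s g by simp
  then have "\<exists>w. length w = 1 \<and> set w \<subseteq> S \<union> (\<lambda>s. inv\<^bsub>G\<^esub> s) ` S \<and> foldr (\<lambda>a b. a \<otimes>\<^bsub>G\<^esub> b) w \<one>\<^bsub>G\<^esub> = ?x"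
    using s by (intro exI[of _ "[s]"]) auto
  then show ?thesis unfolding word_dist_def word_length_def by (rule Least_le)
qed

lemma coset_sub:
  assumes "group_pair G I P" "B \<in> cosets_pair G I P"
  shows "snd B \<subseteq> carrier G" "\<exists>x. x \<in> snd B"
proof -
  interpret G: group G using assms by (simp add: group_pair_def)
  obtain i x where B: "B = (i, x <#\<^bsub>G\<^esub> P i)" "i \<in> I" "x \<in> carrier G" using assms(2) by (auto simp: cosets_pair_def)
  have sg: "subgroup (P i) G" using assms(1) B by (simp add: group_pair_def)
  then have "P i \<subseteq> carrier G" by (simp add: subgroup.subset)
  then show "snd B \<subseteq> carrier G" using B G.l_coset_subset_G by simp
  have "x \<otimes>\<^bsub>G\<^esub> \<one>\<^bsub>G\<^esub> \<in> x <#\<^bsub>G\<^esub> P i" unfolding l_coset_def using sg by (auto intro: subgroup.one_closed)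
  then show "\<exists>x. x \<in> snd B" using B by auto
qed

lemma cone_adj_sym: "cone_adj G S x y \<Longrightarrow> cone_adj G S y x"
  by (auto simp: cone_adj_def split: sum.splits)

lemma cone_adj_cones: "cone_adj G S x y \<Longrightarrow> is_cone_vertex x \<Longrightarrow> \<not> is_cone_vertex y"
  by (auto simp: cone_adj_def is_cone_vertex_def split: sum.splits)



lemma haus_extract:
  assumes "hausdorff_word H T X Y < ereal M" "x \<in> X"
  shows "\<exists>y\<in>Y. real (word_dist H T x y) < M"
proof -
  have "(INF y\<in>Y. ereal (real (word_dist H T x y))) \<le> (SUP x\<in>X. INF y\<in>Y. ereal (real (word_dist H T x y)))"
    using assms(2) by (rule SUP_upper)
  also have "\<dots> \<le> hausdorff_word H T X Y" unfolding hausdorff_word_def by simp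
  finally have "(INF y\<in>Y. ereal (real (word_dist H T x y))) < ereal M" using assms(1) by simp
  then show ?thesis unfolding INF_less_iff by auto
qed

lemma nc_tl: "p \<noteq> [] \<Longrightarrow> nc (tl p) = nc p - (if is_cone_vertex (hd p) then 1 else 0)"
  by (cases p) auto

lemma inl_V: "Inl g \<in> cone_vertices G I P \<longleftrightarrow> g \<in> carrier G"
  by (auto simp: cone_vertices_def)

lemma inr_V: "Inr A \<in> cone_vertices G I P \<longleftrightarrow> A \<in> cosets_pair G I P"
  by (auto simp: cone_vertices_def)

definition Fm :: "('a \<Rightarrow> 'b) \<Rightarrow> ('x \<Rightarrow> 'y) \<Rightarrow> 'a + 'x \<Rightarrow> 'b + 'y" where
  "Fm f1 f2 = case_sum (Inl \<circ> f1) (Inr \<circ> f2)"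

lemma Fm_simps[simp]: "Fm f1 f2 (Inl g) = Inl (f1 g)" "Fm f1 f2 (Inr A) = Inr (f2 A)"
  by (auto simp: Fm_def)

lemma Fm_cone[simp]: "is_cone_vertex (Fm f1 f2 v) = is_cone_vertex v"
  by (cases v) (auto simp: is_cone_vertex_def)

lemma Fm_V:
  assumes "lipschitz_pair G S I P H T J Q L C M f1 f2"
  shows "Fm f1 f2 ` cone_vertices G I P \<subseteq> cone_vertices H J Q"
  using assms unfolding lipschitz_pair_def cone_vertices_def by auto

lemma lp_facts:
  assumes "lipschitz_pair G S I P H T J Q L C M f1 f2"
  shows "L \<ge> 1" "C \<ge> 0" "M \<ge> 0" "\<And>x. x \<in> carrier G \<Longrightarrow> f1 x \<in> carrier H"
    "\<And>A. A \<in> cosets_pair G I P \<Longrightarrow> f2 A \<in> cosets_pair H J Q"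
    "\<And>x y. x \<in> carrier G \<Longrightarrow> y \<in> carrier G \<Longrightarrow>
        real (word_dist H T (f1 x) (f1 y)) \<le> L * real (word_dist G S x y) + C"
    "\<And>A. A \<in> cosets_pair G I P \<Longrightarrow> hausdorff_word H T (f1 ` snd A) (snd (f2 A)) < ereal M"
  using assms unfolding lipschitz_pair_def by (auto simp: Pi_iff)

lemma build_map_IR:
  fixes G :: "('a, 'c) monoid_scheme" and I :: "'i set" and H :: "('b, 'd) monoid_scheme" and J :: "'j set"
  assumes gp1: "group_pair G I P" and fs1: "fin_gen_set G S"
    and gp2: "group_pair H J Q" and fs2: "fin_gen_set H T"
    and lp: "lipschitz_pair G S I P H T J Q L C M f1 f2" and K: "L + C + M \<le> real K"
    and A: "A \<in> cosets_pair G I P" and g: "g \<in> snd A"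
  shows "\<exists>p. p \<noteq> [] \<and> hd p = Inl (f1 g) \<and> last p = Inr (f2 A) \<and>
     edge_path (cone_vertices H J Q) (cone_adj H T) p \<and> length (tl p) \<le> Suc K \<and> nc p = 1"
proof -
  have grpH: "group H" using gp2 by (simp add: group_pair_def)
  have L: "L \<ge> 1" "C \<ge> 0" "M \<ge> 0" using lp_facts[OF lp] by auto
  have gC: "g \<in> carrier G" using coset_sub(1)[OF gp1 A] g by auto
  have f2A: "f2 A \<in> cosets_pair H J Q" using lp_facts(5)[OF lp A] .
  have "hausdorff_word H T (f1 ` snd A) (snd (f2 A)) < ereal M" using lp_facts(7)[OF lp A] .
  moreover have "f1 g \<in> f1 ` snd A" using g by simp
  ultimately obtain h where h: "h \<in> snd (f2 A)" "real (word_dist H T (f1 g) h) < M"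
    using haus_extract by metis
  have hC: "h \<in> carrier H" using coset_sub(1)[OF gp2 f2A] h by auto
  have f1g: "f1 g \<in> carrier H" using lp_facts(4)[OF lp gC] .
  obtain p0 where p0: "edge_path (cone_vertices H J Q) (cone_adj H T) p0" "hd p0 = Inl (f1 g)" "last p0 = Inl h"
    "length p0 = Suc (word_dist H T (f1 g) h)" "nc p0 = 0"
    using dist_path[OF grpH fs2 f1g hC, of J Q] by blast
  have ne: "p0 \<noteq> []" using p0 by (auto simp: edge_path_def)
  have e: "edge_path (cone_vertices H J Q) (cone_adj H T) (p0 @ [Inr (f2 A)])"
    by (rule edge_path_appI) (use p0 f2A h in \<open>auto simp: inr_V cone_adj_def\<close>)
  have d: "word_dist H T (f1 g) h \<le> K" using h(2) K L by linarith
  show ?thesis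
    by (intro exI[of _ "p0 @ [Inr (f2 A)]"]) (use e p0 ne d in \<open>auto simp: is_cone_vertex_def\<close>)
qed

lemma build_map:
  fixes G :: "('a, 'c) monoid_scheme" and I :: "'i set" and H :: "('b, 'd) monoid_scheme" and J :: "'j set"
  assumes gp1: "group_pair G I P" and fs1: "fin_gen_set G S"
    and gp2: "group_pair H J Q" and fs2: "fin_gen_set H T"
    and lp: "lipschitz_pair G S I P H T J Q L C M f1 f2" and K: "L + C + M \<le> real K"
  shows "\<exists>\<tau>. good (Fm f1 f2) \<tau> \<and>
     (\<forall>x y. x \<in> cone_vertices G I P \<longrightarrow> y \<in> cone_vertices G I P \<longrightarrow> cone_adj G S x y \<longrightarrow>
        edge_path (cone_vertices H J Q) (cone_adj H T) (\<tau> x y)) \<and>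
     (\<forall>x y. length (tl (\<tau> x y)) \<le> Suc K) \<and>
     (\<forall>x y. nc (tl (\<tau> x y)) \<le> (if is_cone_vertex y then 1 else 0))"
proof -
  let ?F = "Fm f1 f2"
  let ?R = "\<lambda>x y p. p \<noteq> [] \<and> hd p = ?F x \<and> last p = ?F y \<and>
     (x \<in> cone_vertices G I P \<and> y \<in> cone_vertices G I P \<and> cone_adj G S x y \<longrightarrow>
        edge_path (cone_vertices H J Q) (cone_adj H T) p) \<and>
     length (tl p) \<le> Suc K \<and> nc (tl p) \<le> (if is_cone_vertex y then 1 else 0)"
  have grpG: "group G" using gp1 by (simp add: group_pair_def)
  have grpH: "group H" using gp2 by (simp add: group_pair_def)
  have SG: "S \<subseteq> carrier G" using fs1 by (simp add: fin_gen_set_def)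
  have L: "L \<ge> 1" "C \<ge> 0" "M \<ge> 0" using lp_facts[OF lp] by auto
  have ex: "\<exists>p. ?R x y p" for x y
  proof (cases "x \<in> cone_vertices G I P \<and> y \<in> cone_vertices G I P \<and> cone_adj G S x y")
    case False
    then show ?thesis by (intro exI[of _ "[?F x, ?F y]"]) auto
  next
    case True
    then have xV: "x \<in> cone_vertices G I P" and yV: "y \<in> cone_vertices G I P" and a: "cone_adj G S x y" by auto
    show ?thesis
    proof (cases x)
      case (Inl g)
      note x = Inl
      show ?thesis
      proof (cases y)
        case (Inl g')
        have gC: "g \<in> carrier G" "g' \<in> carrier G" using xV yV x Inl by (auto simp: inl_V)
        have d1: "word_dist G S g g' \<le> 1" using adj_dist[OF grpG SG gC] a x Inl by simp
        have fC: "f1 g \<in> carrier H" "f1 g' \<in> carrier H" using lp_facts(4)[OF lp] gC by auto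
        have "real (word_dist H T (f1 g) (f1 g')) \<le> L * real (word_dist G S g g') + C"
          using lp_facts(6)[OF lp gC] .
        also have "\<dots> \<le> L * 1 + C" using d1 L by (intro add_mono mult_left_mono) auto
        finally have dH: "word_dist H T (f1 g) (f1 g') \<le> K" using K L by linarith
        obtain p where p: "edge_path (cone_vertices H J Q) (cone_adj H T) p" "hd p = Inl (f1 g)" "last p = Inl (f1 g')"
          "length p = Suc (word_dist H T (f1 g) (f1 g'))" "nc p = 0"
          using dist_path[OF grpH fs2 fC, of J Q] by blast
        have "nc (tl p) = 0" using p nc_tl[of p] by (cases p) auto
        then show ?thesis using p dH x Inl by (intro exI[of _ p]) (auto simp: edge_path_def)
      next
        case (Inr A)
        have A: "A \<in> cosets_pair G I P" "g \<in> snd A" using yV a x Inr by (auto simp: inr_V cone_adj_def)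
        obtain p where p: "p \<noteq> []" "hd p = Inl (f1 g)" "last p = Inr (f2 A)"
          "edge_path (cone_vertices H J Q) (cone_adj H T) p" "length (tl p) \<le> Suc K" "nc p = 1"
          using build_map_IR[OF gp1 fs1 gp2 fs2 lp K A] by blast
        have "nc (tl p) \<le> 1" using p nc_tl[of p] by simp
        then show ?thesis using p x Inr by (intro exI[of _ p]) (auto simp: is_cone_vertex_def)
      qed
    next
      case (Inr A)
      note x = Inr
      show ?thesis
      proof (cases y)
        case (Inl g)
        have A: "A \<in> cosets_pair G I P" "g \<in> snd A" using xV a x Inl by (auto simp: inr_V cone_adj_def)
        obtain p where p: "p \<noteq> []" "hd p = Inl (f1 g)" "last p = Inr (f2 A)"
          "edge_path (cone_vertices H J Q) (cone_adj H T) p" "length (tl p) \<le> Suc K" "nc p = 1"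
          using build_map_IR[OF gp1 fs1 gp2 fs2 lp K A] by blast
        have r: "edge_path (cone_vertices H J Q) (cone_adj H T) (rev p)"
          using p edge_path_rev[of "cone_adj H T" "cone_vertices H J Q" p] cone_adj_sym by blast
        have "nc (tl (rev p)) = 0" using p nc_tl[of "rev p"] by (simp add: hd_rev is_cone_vertex_def)
        moreover have "length (tl (rev p)) \<le> Suc K" using p by simp
        ultimately show ?thesis using p r x Inl
          by (intro exI[of _ "rev p"]) (auto simp: hd_rev last_rev is_cone_vertex_def)
      next
        case (Inr B)
        then show ?thesis using a x by (simp add: cone_adj_def)
      qed
    qed
  qed
  then have "\<forall>xy. \<exists>p. ?R (fst xy) (snd xy) p" by blast
  then obtain f where f: "\<forall>xy. ?R (fst xy) (snd xy) (f xy)" by (metis choice)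
  define \<tau> where "\<tau> = (\<lambda>x y. f (x, y))"
  have R: "?R x y (\<tau> x y)" for x y using f[rule_format, of "(x, y)"] unfolding \<tau>_def by simp
  show ?thesis
    by (intro exI[of _ \<tau>]) (use R in \<open>auto simp: good_def\<close>)
qed



lemma unicone_nc: "unicone c \<longleftrightarrow> nc c \<le> 1"
  by (simp add: unicone_def nc_def)

lemma edge_loop_snoc:
  assumes "edge_path V adj (D @ [x])" "D \<noteq> []" "hd D = x"
  shows "edge_loop V adj D"
proof -
  have "edge_path V adj D" "adj (last D) x" using assms unfolding edge_path_append by auto
  then show ?thesis using assms(3) by (simp add: edge_loop_def)
qed

lemma ins_cond:
  assumes g\<Psi>: "good \<Psi> \<rho>" and \<Psi>V: "\<Psi> ` VH \<subseteq> VG"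
    and \<rho>e: "\<And>x y. x \<in> VH \<Longrightarrow> y \<in> VH \<Longrightarrow> adjH x y \<Longrightarrow> edge_path VG adjG (\<rho> x y)"
    and \<rho>len: "\<And>x y. length (tl (\<rho> x y)) \<le> Suc K"
    and \<rho>nc: "\<And>x y. nc (tl (\<rho> x y)) \<le> (if is_cone_vertex y then 1 else 0)"
    and \<Psi>c: "\<And>v. is_cone_vertex (\<Psi> v) = is_cone_vertex v"
    and cones: "\<And>x y. adjH x y \<Longrightarrow> is_cone_vertex x \<Longrightarrow> \<not> is_cone_vertex y"
    and l': "Suc K * (l + 2) < l'"
    and e: "edge_path VH adjH (x # c @ [x])"
    and cc: "x # c \<in> {c. edge_loop VH adjH c \<and> unicone c \<and> length c < l} \<or> (\<exists>v. c = [v])"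
    and ne: "pt \<rho> x (c @ [x]) \<noteq> []"
  shows "\<Psi> x # butlast (pt \<rho> x (c @ [x])) \<in> {c. edge_loop VG adjG c \<and> unicone c \<and> length c < l'}"
proof -
  define p where "p = pt \<rho> x (c @ [x])"
  define D where "D = \<Psi> x # butlast p"
  have E: "edge_path VG adjG (\<Psi> x # p)"
    using pmap_edge[OF g\<Psi> \<Psi>V \<rho>e e] unfolding p_def by (simp add: pmap_Cons)
  have lp: "last p = \<Psi> x" using last_pt[OF g\<Psi>, of x "c @ [x]"] ne unfolding p_def by simp
  have pD: "p = butlast p @ [\<Psi> x]" using lp ne unfolding p_def by (metis append_butlast_last_id)
  have ED: "\<Psi> x # p = D @ [\<Psi> x]" unfolding D_def using pD by (metis append_Cons)
  have loop: "edge_loop VG adjG D"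
    by (rule edge_loop_snoc) (use E ED in \<open>auto simp: D_def\<close>)
  have ncD: "nc D = nc p"
  proof -
    have "nc (\<Psi> x # p) = nc D + (if is_cone_vertex (\<Psi> x) then 1 else 0)" using ED by simp
    then show ?thesis by simp
  qed
  have ncp: "nc p \<le> nc (x # c)"
    using nc_pt[of \<rho> x "c @ [x]", OF \<rho>nc] unfolding p_def by simp
  have "nc (x # c) \<le> 1"
  proof (cases "\<exists>v. c = [v]")
    case True
    then obtain v where v: "c = [v]" by blast
    have "adjH x v" using e v by (simp add: edge_path_Cons2)
    then show ?thesis using cones[of x v] v by auto
  next
    case False
    then show ?thesis using cc by (simp add: unicone_nc)
  qed
  then have uni: "unicone D" using ncD ncp by (simp add: unicone_nc)
  have "length D = length p" unfolding D_def using ne p_def by simp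
  also have "\<dots> \<le> Suc K * length (c @ [x])" unfolding p_def by (rule length_pt[OF \<rho>len])
  also have "\<dots> \<le> Suc K * (l + 2)"
  proof -
    have "length (c @ [x]) \<le> l + 2" using cc by auto
    then show ?thesis by (intro mult_left_mono) auto
  qed
  finally have "length D < l'" using l' by linarith
  then show ?thesis using loop uni unfolding D_def p_def by simp
qed

lemma sq_cond:
  assumes symG: "\<And>x y. adjG x y \<Longrightarrow> adjG y x"
    and g\<Phi>: "good \<Phi> \<tau>" and \<Phi>V: "\<Phi> ` VG \<subseteq> VH"
    and \<tau>e: "\<And>x y. x \<in> VG \<Longrightarrow> y \<in> VG \<Longrightarrow> adjG x y \<Longrightarrow> edge_path VH adjH (\<tau> x y)"
    and \<tau>len: "\<And>x y. length (tl (\<tau> x y)) \<le> Suc K"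
    and \<tau>nc: "\<And>x y. nc (tl (\<tau> x y)) \<le> (if is_cone_vertex y then 1 else 0)"
    and \<Phi>c: "\<And>v. is_cone_vertex (\<Phi> v) = is_cone_vertex v"
    and g\<Psi>: "good \<Psi> \<rho>" and \<Psi>V: "\<Psi> ` VH \<subseteq> VG"
    and \<rho>e: "\<And>x y. x \<in> VH \<Longrightarrow> y \<in> VH \<Longrightarrow> adjH x y \<Longrightarrow> edge_path VG adjG (\<rho> x y)"
    and \<rho>len: "\<And>x y. length (tl (\<rho> x y)) \<le> Suc K"
    and \<rho>nc: "\<And>x y. nc (tl (\<rho> x y)) \<le> (if is_cone_vertex y then 1 else 0)"
    and \<Psi>c: "\<And>v. is_cone_vertex (\<Psi> v) = is_cone_vertex v"
    and \<sigma>: "\<And>v. v \<in> VG \<Longrightarrow> edge_path VG adjG (\<sigma> v) \<and> hd (\<sigma> v) = v \<and> last (\<sigma> v) = \<Psi> (\<Phi> v) \<and>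
        length (\<sigma> v) \<le> Suc K \<and> nc (\<sigma> v) = (if is_cone_vertex v then 1 else 0)"
    and cones: "\<And>x y. adjG x y \<Longrightarrow> is_cone_vertex x \<Longrightarrow> \<not> is_cone_vertex y"
    and l': "(K + 2) * (K + 2) \<le> l'"
    and xz: "x \<in> VG" "z \<in> VG" "adjG x z"
  shows "butlast ((x # \<sigma> z) @ tl (rev (\<sigma> x @ tl (pmap \<Psi> \<rho> (pmap \<Phi> \<tau> [x, z])))))
     \<in> {c. edge_loop VG adjG c \<and> unicone c \<and> length c < l'}"
proof -
  define W where "W = pmap \<Psi> \<rho> (pmap \<Phi> \<tau> [x, z])"
  have exz: "edge_path VG adjG [x, z]" using xz by (simp add: edge_path_Cons2)
  have U: "edge_path VH adjH (pmap \<Phi> \<tau> [x, z])" by (rule pmap_edge[OF g\<Phi> \<Phi>V \<tau>e exz])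
  have We: "edge_path VG adjG W" unfolding W_def using pmap_edge[OF g\<Psi> \<Psi>V] \<rho>e U by blast
  have Wh: "hd W = \<Psi> (\<Phi> x)" unfolding W_def by (simp add: pmap_hd pmap_ne)
  have Wl: "last W = \<Psi> (\<Phi> z)" unfolding W_def by (simp add: pmap_last[OF g\<Psi>] pmap_last[OF g\<Phi>] pmap_ne)
  have tW: "tl W = pt \<rho> (\<Phi> x) (tl (\<tau> x z))" unfolding W_def by (simp add: pmap_Cons)
  have sx: "edge_path VG adjG (\<sigma> x)" "hd (\<sigma> x) = x" "last (\<sigma> x) = \<Psi> (\<Phi> x)" "length (\<sigma> x) \<le> Suc K"
    "nc (\<sigma> x) = (if is_cone_vertex x then 1 else 0)" using \<sigma>[OF xz(1)] by auto
  have sz: "edge_path VG adjG (\<sigma> z)" "hd (\<sigma> z) = z" "last (\<sigma> z) = \<Psi> (\<Phi> z)" "length (\<sigma> z) \<le> Suc K"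
    "nc (\<sigma> z) = (if is_cone_vertex z then 1 else 0)" using \<sigma>[OF xz(2)] by auto
  define Q where "Q = \<sigma> x @ tl W"
  define R where "R = x # \<sigma> z"
  have Qe: "edge_path VG adjG Q" "last Q = \<Psi> (\<Phi> z)" "hd Q = x"
    unfolding Q_def using edge_path_join[OF sx(1) We] sx Wh Wl by auto
  have sz0: "\<sigma> z \<noteq> []" using sz by (auto simp: edge_path_def)
  have Re: "edge_path VG adjG R" "hd R = x" "last R = \<Psi> (\<Phi> z)"
    unfolding R_def using edge_path_appI[of VG adjG "[x]" "\<sigma> z"] sz xz sz0 by auto
  have rQ: "edge_path VG adjG (rev Q)" using Qe edge_path_rev[of adjG VG Q] symG by blast
  have Q0: "Q \<noteq> []" using Qe by (auto simp: edge_path_def)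
  define X where "X = R @ tl (rev Q)"
  have Xe: "edge_path VG adjG X" "last X = x"
    unfolding X_def using edge_path_join[OF Re(1) rQ] Re Qe Q0 by (auto simp: hd_rev last_rev)
  have lenX: "length X = length R + length Q - 1" unfolding X_def using Q0 by (cases Q) auto
  have lR: "length R \<ge> 2" unfolding R_def using sz0 by (cases "\<sigma> z") auto
  define c0 where "c0 = butlast X"
  have X0: "X \<noteq> []" using lenX lR by auto
  have Xc: "X = c0 @ [x]" unfolding c0_def using Xe X0 by (metis append_butlast_last_id)
  have lQ1: "length Q \<ge> 1" using Q0 by (cases Q) auto
  have "length X = length c0 + 1" using Xc by simp
  then have c00: "c0 \<noteq> []" using lenX lR lQ1 by auto
  have hc: "hd c0 = x" using Xc c00 unfolding X_def R_def by (cases c0) auto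
  have loop: "edge_loop VG adjG c0" by (rule edge_loop_snoc) (use Xe Xc c00 hc in auto)
  have revQ: "rev Q = \<Psi> (\<Phi> z) # tl (rev Q)" using Q0 Qe by (metis hd_rev list.collapse rev_is_Nil_conv)
  have n1: "nc X = nc c0 + (if is_cone_vertex x then 1 else 0)" using Xc by simp
  have n2: "nc X = (if is_cone_vertex x then 1 else 0) + (if is_cone_vertex z then 1 else 0) + nc (tl (rev Q))"
    unfolding X_def R_def using sz by simp
  have n3: "nc Q = (if is_cone_vertex z then 1 else 0) + nc (tl (rev Q))"
    using arg_cong[OF revQ, of nc] \<Psi>c \<Phi>c by simp
  have n4: "nc (tl W) \<le> (if is_cone_vertex z then 1 else 0)"
    unfolding tW using nc_pt[of \<rho> "\<Phi> x" "tl (\<tau> x z)", OF \<rho>nc] \<tau>nc[of x z] by linarith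
  have n5: "nc Q \<le> (if is_cone_vertex x then 1 else 0) + (if is_cone_vertex z then 1 else 0)"
    unfolding Q_def using n4 sx by simp
  have "nc c0 \<le> 1" using n1 n2 n3 n5 cones[OF xz(3)] by (auto split: if_splits)
  then have uni: "unicone c0" by (simp add: unicone_nc)
  have "length (tl W) \<le> Suc K * length (tl (\<tau> x z))" unfolding tW by (rule length_pt[OF \<rho>len])
  also have "\<dots> \<le> Suc K * Suc K" by (intro mult_left_mono \<tau>len) auto
  finally have lW: "length (tl W) \<le> Suc K * Suc K" .
  have lQ: "length Q \<le> Suc K + Suc K * Suc K" unfolding Q_def using lW sx by simp
  have lR2: "length R \<le> Suc (Suc K)" unfolding R_def using sz by simp
  have "length c0 + 1 = length X" using Xc by simp
  moreover have "(K + 2) * (K + 2) = Suc K * Suc K + 2 * K + 3" by (simp add: algebra_simps)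
  ultimately have "length c0 < l'" using lenX lQ lR2 l' by linarith
  then show ?thesis using loop uni unfolding c0_def X_def R_def Q_def W_def by simp
qed



lemma to_inl:
  assumes gp: "group_pair G I P" and u: "u \<in> cone_vertices G I P"
  shows "\<exists>g p. g \<in> carrier G \<and> edge_path (cone_vertices G I P) (cone_adj G S) p \<and> hd p = u \<and> last p = Inl g"
proof (cases u)
  case (Inl g)
  then show ?thesis using u by (intro exI[of _ g] exI[of _ "[u]"]) (auto simp: inl_V)
next
  case (Inr A)
  have A: "A \<in> cosets_pair G I P" using u Inr by (simp add: inr_V)
  obtain a where a: "a \<in> snd A" using coset_sub(2)[OF gp A] by blast
  have aC: "a \<in> carrier G" using coset_sub(1)[OF gp A] a by auto
  have "edge_path (cone_vertices G I P) (cone_adj G S) [Inr A, Inl a]"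
    using A aC a by (simp add: edge_path_Cons2 inl_V inr_V cone_adj_def)
  then show ?thesis using Inr aC by (intro exI[of _ a] exI[of _ "[Inr A, Inl a]"]) auto
qed

lemma conn:
  assumes gp: "group_pair G I P" and fs: "fin_gen_set G S"
    and u: "u \<in> cone_vertices G I P" and v: "v \<in> cone_vertices G I P"
  shows "\<exists>p. edge_path (cone_vertices G I P) (cone_adj G S) p \<and> hd p = u \<and> last p = v"
proof -
  have grp: "group G" using gp by (simp add: group_pair_def)
  obtain g p1 where p1: "g \<in> carrier G" "edge_path (cone_vertices G I P) (cone_adj G S) p1" "hd p1 = u" "last p1 = Inl g"
    using to_inl[OF gp u] by blast
  obtain g' p2 where p2: "g' \<in> carrier G" "edge_path (cone_vertices G I P) (cone_adj G S) p2" "hd p2 = v" "last p2 = Inl g'"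
    using to_inl[OF gp v] by blast
  obtain c where c: "edge_path (cone_vertices G I P) (cone_adj G S) c" "hd c = Inl g" "last c = Inl g'"
    using dist_path[OF grp fs p1(1) p2(1), of I P] by blast
  have r2: "edge_path (cone_vertices G I P) (cone_adj G S) (rev p2)"
    using p2 edge_path_rev[of "cone_adj G S" "cone_vertices G I P" p2] cone_adj_sym by blast
  have p20: "p2 \<noteq> []" using p2 by (auto simp: edge_path_def)
  have lc: "last p1 = hd c" using p1 c by simp
  note j1 = edge_path_join[OF p1(2) c(1) lc]
  have j1': "last (p1 @ tl c) = Inl g'" "hd (p1 @ tl c) = u" using j1 c p1 by auto
  have lc2: "last (p1 @ tl c) = hd (rev p2)" using j1' p2 p20 by (simp add: hd_rev)
  note j2 = edge_path_join[OF j1(1) r2 lc2]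
  show ?thesis
    by (intro exI[of _ "(p1 @ tl c) @ tl (rev p2)"]) (use j2 j1' p2 p20 in \<open>auto simp: hd_rev last_rev\<close>)
qed

theorem lemma4p9:
  fixes G :: "('a, 'c) monoid_scheme" and I :: "'i set" and P :: "'i \<Rightarrow> 'a set" and S :: "'a set"
    and H :: "('b, 'd) monoid_scheme" and J :: "'j set" and Q :: "'j \<Rightarrow> 'b set" and T :: "'b set"
  assumes "group_pair G I P" and "fin_gen_set G S"
    and "group_pair H J Q" and "fin_gen_set H T"
    and "quasi_retract_pair G S I P H T J Q"
    and "coarsely_unicone_sc H J Q T"
  shows "coarsely_unicone_sc G I P S"
proof -
  note gp1 = assms(1) and fs1 = assms(2) and gp2 = assms(3) and fs2 = assms(4)
  have grpG: "group G" using gp1 by (simp add: group_pair_def)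
  obtain L C M f1 f2 r1 r2 where lpf: "lipschitz_pair G S I P H T J Q L C M f1 f2"
    and lpr: "lipschitz_pair H T J Q G S I P L C M r1 r2"
    and ret: "\<forall>g\<in>carrier G. real (word_dist G S (r1 (f1 g)) g) \<le> C"
    and r2f2: "\<forall>A\<in>cosets_pair G I P. r2 (f2 A) = A"
    using assms(5) unfolding quasi_retract_pair_def by blast
  obtain l where scH: "simply_connected_2cx (cone_vertices H J Q) (cone_adj H T) (cone_cells H J Q T l)"
    using assms(6) unfolding coarsely_unicone_sc_def by blast
  define K where "K = nat \<lceil>L + C + M\<rceil>"
  have HK: "L + C + M \<le> real K" unfolding K_def by linarith
  have LCM: "L \<ge> 1" "C \<ge> 0" "M \<ge> 0" using lp_facts[OF lpf] by auto
  let ?VG = "cone_vertices G I P" and ?aG = "cone_adj G S"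
  let ?VH = "cone_vertices H J Q" and ?aH = "cone_adj H T"
  let ?\<Phi> = "Fm f1 f2" and ?\<Psi> = "Fm r1 r2"
  obtain \<tau> where \<tau>: "good ?\<Phi> \<tau>"
     "\<forall>x y. x \<in> ?VG \<longrightarrow> y \<in> ?VG \<longrightarrow> ?aG x y \<longrightarrow> edge_path ?VH ?aH (\<tau> x y)"
     "\<forall>x y. length (tl (\<tau> x y)) \<le> Suc K"
     "\<forall>x y. nc (tl (\<tau> x y)) \<le> (if is_cone_vertex y then 1 else 0)"
    using build_map[OF gp1 fs1 gp2 fs2 lpf HK] by blast
  obtain \<rho> where \<rho>: "good ?\<Psi> \<rho>"
     "\<forall>x y. x \<in> ?VH \<longrightarrow> y \<in> ?VH \<longrightarrow> ?aH x y \<longrightarrow> edge_path ?VG ?aG (\<rho> x y)"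
     "\<forall>x y. length (tl (\<rho> x y)) \<le> Suc K"
     "\<forall>x y. nc (tl (\<rho> x y)) \<le> (if is_cone_vertex y then 1 else 0)"
    using build_map[OF gp2 fs2 gp1 fs1 lpr HK] by blast
  have \<tau>e: "\<And>x y. x \<in> ?VG \<Longrightarrow> y \<in> ?VG \<Longrightarrow> ?aG x y \<Longrightarrow> edge_path ?VH ?aH (\<tau> x y)" using \<tau>(2) by blast
  have \<tau>len: "\<And>x y. length (tl (\<tau> x y)) \<le> Suc K" using \<tau>(3) by blast
  have \<tau>nc: "\<And>x y. nc (tl (\<tau> x y)) \<le> (if is_cone_vertex y then 1 else 0)" using \<tau>(4) by blast
  have \<rho>e: "\<And>x y. x \<in> ?VH \<Longrightarrow> y \<in> ?VH \<Longrightarrow> ?aH x y \<Longrightarrow> edge_path ?VG ?aG (\<rho> x y)" using \<rho>(2) by blast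
  have \<rho>len: "\<And>x y. length (tl (\<rho> x y)) \<le> Suc K" using \<rho>(3) by blast
  have \<rho>nc: "\<And>x y. nc (tl (\<rho> x y)) \<le> (if is_cone_vertex y then 1 else 0)" using \<rho>(4) by blast
  have \<Phi>V: "?\<Phi> ` ?VG \<subseteq> ?VH" by (rule Fm_V[OF lpf])
  have \<Psi>V: "?\<Psi> ` ?VH \<subseteq> ?VG" by (rule Fm_V[OF lpr])
  have sex: "\<exists>p. v \<in> ?VG \<longrightarrow> edge_path ?VG ?aG p \<and> hd p = v \<and> last p = ?\<Psi> (?\<Phi> v) \<and>
        length p \<le> Suc K \<and> nc p = (if is_cone_vertex v then 1 else 0)" for v
  proof (cases "v \<in> ?VG")
    case False then show ?thesis by blast
  next
    case True
    show ?thesis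
    proof (cases v)
      case (Inl g)
      have gC: "g \<in> carrier G" using True Inl by (simp add: inl_V)
      have rC: "r1 (f1 g) \<in> carrier G" using lp_facts(4)[OF lpr lp_facts(4)[OF lpf gC]] .
      obtain p0 where p0: "edge_path ?VG ?aG p0" "hd p0 = Inl (r1 (f1 g))" "last p0 = Inl g"
        "length p0 = Suc (word_dist G S (r1 (f1 g)) g)" "nc p0 = 0"
        using dist_path[OF grpG fs1 rC gC, of I P] by blast
      have d: "word_dist G S (r1 (f1 g)) g \<le> K" using ret gC HK LCM by force
      have r: "edge_path ?VG ?aG (rev p0)"
        using p0 edge_path_rev[of ?aG ?VG p0] cone_adj_sym by blast
      have p00: "p0 \<noteq> []" using p0 by (auto simp: edge_path_def)
      show ?thesis using r p0 p00 d Inl by (intro exI[of _ "rev p0"]) (auto simp: hd_rev last_rev is_cone_vertex_def)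
    next
      case (Inr A)
      have A: "A \<in> cosets_pair G I P" using True Inr by (simp add: inr_V)
      show ?thesis using A r2f2 True Inr by (intro exI[of _ "[v]"]) (auto simp: is_cone_vertex_def)
    qed
  qed
  then obtain \<sigma> where \<sigma>: "\<And>v. v \<in> ?VG \<Longrightarrow> edge_path ?VG ?aG (\<sigma> v) \<and> hd (\<sigma> v) = v \<and> last (\<sigma> v) = ?\<Psi> (?\<Phi> v) \<and>
        length (\<sigma> v) \<le> Suc K \<and> nc (\<sigma> v) = (if is_cone_vertex v then 1 else 0)"
    by metis
  define l' where "l' = (K + 2) * (K + 2) * (l + 3)"
  have l'1: "Suc K * (l + 2) < l'"
  proof -
    have "Suc K * (l + 2) < (K + 2) * (l + 3)" by (simp add: algebra_simps)
    also have "\<dots> \<le> (K + 2) * (K + 2) * (l + 3)"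
    proof -
      have "1 * ((K + 2) * (l + 3)) \<le> (K + 2) * ((K + 2) * (l + 3))" by (rule mult_le_mono1) simp
      then show ?thesis by (simp only: mult_1 mult.assoc)
    qed
    finally show ?thesis unfolding l'_def .
  qed
  have l'2: "(K + 2) * (K + 2) \<le> l'"
  proof -
    have "(K + 2) * (K + 2) * 1 \<le> (K + 2) * (K + 2) * (l + 3)" by (rule mult_le_mono2) simp
    then show ?thesis unfolding l'_def by (simp only: mult_1_right)
  qed
  have cG: "\<forall>c\<in>cone_cells G I P S l'. edge_loop ?VG ?aG c" by (simp add: cone_cells_def)
  have cH: "\<forall>c\<in>cone_cells H J Q T l. edge_loop ?VH ?aH c" by (simp add: cone_cells_def)
  have scH': "\<And>p. edge_path ?VH ?aH p \<Longrightarrow> hd p = last p \<Longrightarrow> hrel ?VH ?aH (cone_cells H J Q T l) p [hd p]"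
    using scH unfolding simply_connected_2cx_def by blast
  have ins: "\<And>x c. edge_path ?VH ?aH (x # c @ [x]) \<Longrightarrow> (x # c \<in> cone_cells H J Q T l \<or> (\<exists>v. c = [v])) \<Longrightarrow>
      pt \<rho> x (c @ [x]) \<noteq> [] \<Longrightarrow> ?\<Psi> x # butlast (pt \<rho> x (c @ [x])) \<in> cone_cells G I P S l'"
    unfolding cone_cells_def
    by (rule ins_cond[OF \<rho>(1) \<Psi>V \<rho>e \<rho>len \<rho>nc Fm_cone cone_adj_cones l'1])
  have sq: "\<And>x z. x \<in> ?VG \<Longrightarrow> z \<in> ?VG \<Longrightarrow> ?aG x z \<Longrightarrow>
        butlast ((x # \<sigma> z) @ tl (rev (\<sigma> x @ tl (pmap ?\<Psi> \<rho> (pmap ?\<Phi> \<tau> [x, z]))))) \<in> cone_cells G I P S l'"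
    unfolding cone_cells_def
    by (rule sq_cond[OF cone_adj_sym \<tau>(1) \<Phi>V \<tau>e \<tau>len \<tau>nc Fm_cone \<rho>(1) \<Psi>V \<rho>e \<rho>len \<rho>nc Fm_cone \<sigma> cone_adj_cones l'2])
  have \<sigma>': "\<And>v. v \<in> ?VG \<Longrightarrow> edge_path ?VG ?aG (\<sigma> v) \<and> hd (\<sigma> v) = v \<and> last (\<sigma> v) = ?\<Psi> (?\<Phi> v)"
    using \<sigma> by blast
  have loops: "hrel ?VG ?aG (cone_cells G I P S l') p [hd p]" if "edge_path ?VG ?aG p" "hd p = last p" for p
    by (rule abstract_loops[OF cone_adj_sym cG cH scH' \<tau>(1) \<Phi>V \<tau>e \<rho>(1) \<Psi>V \<rho>e ins \<sigma>' sq that])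
  have "\<one>\<^bsub>G\<^esub> \<in> carrier G" using grpG by (simp add: group.is_monoid monoid.one_closed)
  then have ne: "?VG \<noteq> {}" by (auto simp: cone_vertices_def)
  have "simply_connected_2cx ?VG ?aG (cone_cells G I P S l')"
    unfolding simply_connected_2cx_def using ne conn[OF gp1 fs1] loops by blast
  then show ?thesis unfolding coarsely_unicone_sc_def by blast
qed


end
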